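(* Let $S$ be an atomic base, let $\Gamma = x_1:A_1,\dots,x_n:A_n$ be a context and let $t$ be a term with $tFV(t)\subseteq\{x_1,\dots,x_n\}$. If the term $t$ of $A$ from $\Gamma$ is I-valid (with respect to $S$), then there is a normal proof-term $s$ (with respect to $S$) such that $t\twoheadrightarrow s$ and $\Gamma\vdash s:A$ is derivable in $\mathbf{IL}_{\mathbf{at}}$.
   Context: System $\mathbf{IL}_{\mathbf{at}}$. Formulas: $A,B ::= X \mid A\to B \mid \forall X.A$, $X$ an atom. Terms: $t,s ::= x \mid c^A \mid \lambda x.t \mid ts \mid \Lambda X.t \mid tX$ ($x$ term-variable, $c^A$ a term-constant for each formula $A$, $X$ an atom). Terms/formulas up to $\alpha$-equivalence; capture-avoiding substitutions $t[x:=s]$, $t[X:=Y]$, $A[X:=B]$; $t[\vec{t_i}]$ is simultaneous substitution $t[x_1:=t_1,\dots,x_n:=t_n]$. $tFV(t)$: free term-variables; a term is closed if $tFV(t)=\emptyset$. A context is a finite set $x_1:A_1,\dots,x_n:A_n$ of distinct variables; $PFV(\Gamma)$ the propositional variables free in the $A_i$. Derivability of $\Gamma\vdash t:A$: $\Gamma,x:A\vdash x:A$; $\Gamma\vdash c^A:A$; $\to$-introduction ($\Gamma,x:A\vdash t:B$ gives $\Gamma\vdash\lambda x.t:A\to B$); $\to$-elimination ($\Gamma\vdash t:A\to B$, $\Gamma\vdash s:A$ give $\Gamma\vdash ts:B$); $\forall$-introduction ($\Gamma\vdash t:A$, $X\notin PFV(\Gamma)$ give $\Gamma\vdash \Lambda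 X.t:\forall X.A$); $\forall$-elimination ($\Gamma\vdash t:\forall X.A$ gives $\Gamma\vdash tY:A[X:=Y]$ for any atom $Y$). $\beta$-reduction: $(\lambda x.t)s\to_\beta t[x:=s]$, $(\Lambda X.t)Y\to_\beta t[X:=Y]$, closed under all term contexts. Normal = containing no such redex. $\twoheadrightarrow$ = reflexive-transitive closure of $\to_\beta$. An atomic base $S$ is a set of term-constants $c^X$ for atoms $X$; a proof-term is a term containing no term-constant other than those $c^X\in S$. qI-validity: (1) a closed term $t$ of an atom $X$ is qI-valid iff $t\twoheadrightarrow s$ for some normal $s$ with $\vdash s:X$ derivable; (2) a closed term $t$ of $B\to C$ is qI-valid iff $t\twoheadrightarrow\lambda x.u$ for some $u$ such that $u[x:=s]$ of $C$ is qI-valid for every qI-valid closed term $s$ of $B$; (3) a closed term $t$ of $\forall X.A$ is qI-valid iff $t\twoheadrightarrow\Lambda X.u$ for some $u$ such that $u[X:=Y]$ of $A[X:=Y]$ is qI-valid for every atom $Y$; (4) a term $t$ of $A$ from $x_1:A_1,\dots,x_n:A_n$ with $tFV(t)\subseteq\{x_1,\dots,x_n\}$ is qI-valid iff $t[\vec{t_i}]$ of $A$ is qI-valid for all qI-valid closed terms $t_i$ of $A_i$. A term is I-valid iff it is a proof-term and qI-valid. *)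

theory Defs
  imports Main
begin

text \<open>System IL_at in locally nameless representation: free term-variables and
free atoms are names (nat), bound ones are de Bruijn indices. This gives terms and
formulas up to alpha-equivalence.\<close>

datatype atm = FA nat | BA nat

datatype form = At atm | Imp form form | All form

datatype trm = FV nat | BV nat | Con form | Lam trm | App trm trm | TLam trm | TApp trm atm

fun lca :: "nat \<Rightarrow> atm \<Rightarrow> bool" where
  "lca j (FA X) = True"
| "lca j (BA i) = (i < j)"

fun lcf :: "nat \<Rightarrow> form \<Rightarrow> bool" where
  "lcf j (At a) = lca j a"
| "lcf j (Imp A B) = (lcf j A \<and> lcf j B)"
| "lcf j (All A) = lcf (Suc j) A"

fun lct :: "nat \<Rightarrow> nat \<Rightarrow> trm \<Rightarrow> bool" where
  "lct k j (FV x) = True"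
| "lct k j (BV i) = (i < k)"
| "lct k j (Con A) = lcf j A"
| "lct k j (Lam t) = lct (Suc k) j t"
| "lct k j (App t s) = (lct k j t \<and> lct k j s)"
| "lct k j (TLam t) = lct k (Suc j) t"
| "lct k j (TApp t a) = (lct k j t \<and> lca j a)"

definition wf_form :: "form \<Rightarrow> bool" where "wf_form A = lcf 0 A"
definition wf_trm :: "trm \<Rightarrow> bool" where "wf_trm t = lct 0 0 t"

fun afv :: "atm \<Rightarrow> nat set" where
  "afv (FA X) = {X}" | "afv (BA i) = {}"

fun ffv :: "form \<Rightarrow> nat set" where
  "ffv (At a) = afv a"
| "ffv (Imp A B) = ffv A \<union> ffv B"
| "ffv (All A) = ffv A"

fun tFV :: "trm \<Rightarrow> nat set" where
  "tFV (FV x) = {x}"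
| "tFV (BV i) = {}"
| "tFV (Con A) = {}"
| "tFV (Lam t) = tFV t"
| "tFV (App t s) = tFV t \<union> tFV s"
| "tFV (TLam t) = tFV t"
| "tFV (TApp t a) = tFV t"

type_synonym ctx = "nat \<rightharpoonup> form"

definition PFV :: "ctx \<Rightarrow> nat set" where
  "PFV \<Gamma> = (\<Union>A\<in>ran \<Gamma>. ffv A)"

definition wf_ctx :: "ctx \<Rightarrow> bool" where
  "wf_ctx \<Gamma> = (finite (dom \<Gamma>) \<and> (\<forall>A\<in>ran \<Gamma>. wf_form A))"

definition closed :: "trm \<Rightarrow> bool" where
  "closed t = (wf_trm t \<and> tFV t = {})"

fun aopen :: "nat \<Rightarrow> nat \<Rightarrow> atm \<Rightarrow> atm" where
  "aopen j Y (FA X) = FA X"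
| "aopen j Y (BA i) = (if i = j then FA Y else BA i)"

fun fopen :: "nat \<Rightarrow> nat \<Rightarrow> form \<Rightarrow> form" where
  "fopen j Y (At a) = At (aopen j Y a)"
| "fopen j Y (Imp A B) = Imp (fopen j Y A) (fopen j Y B)"
| "fopen j Y (All A) = All (fopen (Suc j) Y A)"

fun aclose :: "nat \<Rightarrow> nat \<Rightarrow> atm \<Rightarrow> atm" where
  "aclose j X (FA Z) = (if Z = X then BA j else FA Z)"
| "aclose j X (BA i) = BA i"

fun fclose :: "nat \<Rightarrow> nat \<Rightarrow> form \<Rightarrow> form" where
  "fclose j X (At a) = At (aclose j X a)"
| "fclose j X (Imp A B) = Imp (fclose j X A) (fclose j X B)"
| "fclose j X (All A) = All (fclose (Suc j) X A)"

fun topen :: "nat \<Rightarrow> trm \<Rightarrow> trm \<Rightarrow> trm" where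
  "topen k u (FV x) = FV x"
| "topen k u (BV i) = (if i = k then u else BV i)"
| "topen k u (Con A) = Con A"
| "topen k u (Lam t) = Lam (topen (Suc k) u t)"
| "topen k u (App t s) = App (topen k u t) (topen k u s)"
| "topen k u (TLam t) = TLam (topen k u t)"
| "topen k u (TApp t a) = TApp (topen k u t) a"

fun ttopen :: "nat \<Rightarrow> nat \<Rightarrow> trm \<Rightarrow> trm" where
  "ttopen j Y (FV x) = FV x"
| "ttopen j Y (BV i) = BV i"
| "ttopen j Y (Con A) = Con (fopen j Y A)"
| "ttopen j Y (Lam t) = Lam (ttopen j Y t)"
| "ttopen j Y (App t s) = App (ttopen j Y t) (ttopen j Y s)"
| "ttopen j Y (TLam t) = TLam (ttopen (Suc j) Y t)"
| "ttopen j Y (TApp t a) = TApp (ttopen j Y t) (aopen j Y a)"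

fun tclose :: "nat \<Rightarrow> nat \<Rightarrow> trm \<Rightarrow> trm" where
  "tclose k x (FV y) = (if y = x then BV k else FV y)"
| "tclose k x (BV i) = BV i"
| "tclose k x (Con A) = Con A"
| "tclose k x (Lam t) = Lam (tclose (Suc k) x t)"
| "tclose k x (App t s) = App (tclose k x t) (tclose k x s)"
| "tclose k x (TLam t) = TLam (tclose k x t)"
| "tclose k x (TApp t a) = TApp (tclose k x t) a"

fun ttclose :: "nat \<Rightarrow> nat \<Rightarrow> trm \<Rightarrow> trm" where
  "ttclose j X (FV x) = FV x"
| "ttclose j X (BV i) = BV i"
| "ttclose j X (Con A) = Con (fclose j X A)"
| "ttclose j X (Lam t) = Lam (ttclose j X t)"
| "ttclose j X (App t s) = App (ttclose j X t) (ttclose j X s)"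
| "ttclose j X (TLam t) = TLam (ttclose (Suc j) X t)"
| "ttclose j X (TApp t a) = TApp (ttclose j X t) (aclose j X a)"

text \<open>Simultaneous substitution of terms for free term-variables
(capture-free, since substituted terms are locally closed).\<close>
fun psubst :: "(nat \<Rightarrow> trm) \<Rightarrow> trm \<Rightarrow> trm" where
  "psubst \<sigma> (FV x) = \<sigma> x"
| "psubst \<sigma> (BV i) = BV i"
| "psubst \<sigma> (Con A) = Con A"
| "psubst \<sigma> (Lam t) = Lam (psubst \<sigma> t)"
| "psubst \<sigma> (App t s) = App (psubst \<sigma> t) (psubst \<sigma> s)"
| "psubst \<sigma> (TLam t) = TLam (psubst \<sigma> t)"
| "psubst \<sigma> (TApp t a) = TApp (psubst \<sigma> t) a"

inductive derivable :: "ctx \<Rightarrow> trm \<Rightarrow> form \<Rightarrow> bool" where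
  ax: "wf_ctx \<Gamma> \<Longrightarrow> \<Gamma> x = Some A \<Longrightarrow> derivable \<Gamma> (FV x) A"
| const: "wf_ctx \<Gamma> \<Longrightarrow> wf_form A \<Longrightarrow> derivable \<Gamma> (Con A) A"
| impI: "x \<notin> dom \<Gamma> \<Longrightarrow> wf_form A \<Longrightarrow> derivable (\<Gamma>(x \<mapsto> A)) t B
          \<Longrightarrow> derivable \<Gamma> (Lam (tclose 0 x t)) (Imp A B)"
| impE: "derivable \<Gamma> t (Imp A B) \<Longrightarrow> derivable \<Gamma> s A \<Longrightarrow> derivable \<Gamma> (App t s) B"
| allI: "derivable \<Gamma> t A \<Longrightarrow> X \<notin> PFV \<Gamma>
          \<Longrightarrow> derivable \<Gamma> (TLam (ttclose 0 X t)) (All (fclose 0 X A))"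
| allE: "derivable \<Gamma> t (All A) \<Longrightarrow> derivable \<Gamma> (TApp t (FA Y)) (fopen 0 Y A)"

inductive beta :: "trm \<Rightarrow> trm \<Rightarrow> bool" where
  beta_lam: "wf_trm (App (Lam t) s) \<Longrightarrow> beta (App (Lam t) s) (topen 0 s t)"
| beta_tlam: "wf_trm (TApp (TLam t) (FA Y)) \<Longrightarrow> beta (TApp (TLam t) (FA Y)) (ttopen 0 Y t)"
| cong_lam: "beta t t' \<Longrightarrow> beta (Lam (tclose 0 x t)) (Lam (tclose 0 x t'))"
| cong_appL: "beta t t' \<Longrightarrow> wf_trm s \<Longrightarrow> beta (App t s) (App t' s)"
| cong_appR: "beta s s' \<Longrightarrow> wf_trm t \<Longrightarrow> beta (App t s) (App t s')"
| cong_tlam: "beta t t' \<Longrightarrow> beta (TLam (ttclose 0 X t)) (TLam (ttclose 0 X t'))"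
| cong_tapp: "beta t t' \<Longrightarrow> beta (TApp t (FA Y)) (TApp t' (FA Y))"

abbreviation betas :: "trm \<Rightarrow> trm \<Rightarrow> bool" where
  "betas \<equiv> beta\<^sup>*\<^sup>*"

fun normal :: "trm \<Rightarrow> bool" where
  "normal (FV x) = True"
| "normal (BV i) = True"
| "normal (Con A) = True"
| "normal (Lam t) = normal t"
| "normal (App t s) = ((\<forall>b. t \<noteq> Lam b) \<and> normal t \<and> normal s)"
| "normal (TLam t) = normal t"
| "normal (TApp t a) = ((\<forall>b. t \<noteq> TLam b) \<and> normal t)"

text \<open>An atomic base is given by the set S of atoms X such that c^X is in the base.\<close>
fun proof_term :: "nat set \<Rightarrow> trm \<Rightarrow> bool" where
  "proof_term S (FV x) = True"
| "proof_term S (BV i) = True"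
| "proof_term S (Con A) = (\<exists>X\<in>S. A = At (FA X))"
| "proof_term S (Lam t) = proof_term S t"
| "proof_term S (App t s) = (proof_term S t \<and> proof_term S s)"
| "proof_term S (TLam t) = proof_term S t"
| "proof_term S (TApp t a) = proof_term S t"

lemma size_fopen[simp]: "size (fopen j Y A) = size A"
proof (induction A arbitrary: j)
  case (At a) then show ?case by (cases a) auto
qed auto

function qIv :: "form \<Rightarrow> trm \<Rightarrow> bool" where
  "qIv (At a) t = (\<exists>s. betas t s \<and> normal s \<and> derivable Map.empty s (At a))"
| "qIv (Imp B C) t = (\<exists>u. betas t (Lam u) \<and>
      (\<forall>s. closed s \<and> qIv B s \<longrightarrow> qIv C (topen 0 s u)))"
| "qIv (All A) t = (\<exists>u. betas t (TLam u) \<and>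
      (\<forall>Y. qIv (fopen 0 Y A) (ttopen 0 Y u)))"
  by pat_completeness auto
termination by (relation "measure (\<lambda>(A, t). size A)") auto

definition qIv_ctx :: "ctx \<Rightarrow> trm \<Rightarrow> form \<Rightarrow> bool" where
  "qIv_ctx \<Gamma> t A = (\<forall>\<sigma>. (\<forall>x\<in>dom \<Gamma>. closed (\<sigma> x) \<and> qIv (the (\<Gamma> x)) (\<sigma> x))
      \<longrightarrow> qIv A (psubst \<sigma> t))"

definition I_valid :: "nat set \<Rightarrow> ctx \<Rightarrow> trm \<Rightarrow> form \<Rightarrow> bool" where
  "I_valid S \<Gamma> t A = (proof_term S t \<and> qIv_ctx \<Gamma> t A)"

end

theory Submission
  imports Defs
begin

fun ash :: "nat \<Rightarrow> atm \<Rightarrow> atm" where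
  "ash c (FA X) = FA X"
| "ash c (BA i) = (if i < c then BA i else BA (Suc i))"

fun fsh :: "nat \<Rightarrow> form \<Rightarrow> form" where
  "fsh c (At a) = At (ash c a)"
| "fsh c (Imp A B) = Imp (fsh c A) (fsh c B)"
| "fsh c (All A) = All (fsh (Suc c) A)"

fun sh :: "nat \<Rightarrow> trm \<Rightarrow> trm" where
  "sh c (FV x) = FV x"
| "sh c (BV i) = (if i < c then BV i else BV (Suc i))"
| "sh c (Con A) = Con A"
| "sh c (Lam t) = Lam (sh (Suc c) t)"
| "sh c (App t s) = App (sh c t) (sh c s)"
| "sh c (TLam t) = TLam (sh c t)"
| "sh c (TApp t a) = TApp (sh c t) a"

fun tsh :: "nat \<Rightarrow> trm \<Rightarrow> trm" where
  "tsh c (FV x) = FV x"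
| "tsh c (BV i) = BV i"
| "tsh c (Con A) = Con (fsh c A)"
| "tsh c (Lam t) = Lam (tsh c t)"
| "tsh c (App t s) = App (tsh c t) (tsh c s)"
| "tsh c (TLam t) = TLam (tsh (Suc c) t)"
| "tsh c (TApp t a) = TApp (tsh c t) (ash c a)"

fun tatoms :: "trm \<Rightarrow> nat set" where
  "tatoms (FV x) = {}"
| "tatoms (BV i) = {}"
| "tatoms (Con A) = ffv A"
| "tatoms (Lam t) = tatoms t"
| "tatoms (App t s) = tatoms t \<union> tatoms s"
| "tatoms (TLam t) = tatoms t"
| "tatoms (TApp t a) = tatoms t \<union> afv a"

definition sw :: "nat \<Rightarrow> nat \<Rightarrow> nat \<Rightarrow> nat" where
  "sw a b x = (if x = a then b else if x = b then a else x)"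

fun tsw :: "nat \<Rightarrow> nat \<Rightarrow> trm \<Rightarrow> trm" where
  "tsw a b (FV x) = FV (sw a b x)"
| "tsw a b (BV i) = BV i"
| "tsw a b (Con A) = Con A"
| "tsw a b (Lam t) = Lam (tsw a b t)"
| "tsw a b (App t s) = App (tsw a b t) (tsw a b s)"
| "tsw a b (TLam t) = TLam (tsw a b t)"
| "tsw a b (TApp t c) = TApp (tsw a b t) c"

fun asw :: "nat \<Rightarrow> nat \<Rightarrow> atm \<Rightarrow> atm" where
  "asw a b (FA X) = FA (sw a b X)"
| "asw a b (BA i) = BA i"

fun fsw :: "nat \<Rightarrow> nat \<Rightarrow> form \<Rightarrow> form" where
  "fsw a b (At c) = At (asw a b c)"
| "fsw a b (Imp A B) = Imp (fsw a b A) (fsw a b B)"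
| "fsw a b (All A) = All (fsw a b A)"

fun ttsw :: "nat \<Rightarrow> nat \<Rightarrow> trm \<Rightarrow> trm" where
  "ttsw a b (FV x) = FV x"
| "ttsw a b (BV i) = BV i"
| "ttsw a b (Con A) = Con (fsw a b A)"
| "ttsw a b (Lam t) = Lam (ttsw a b t)"
| "ttsw a b (App t s) = App (ttsw a b t) (ttsw a b s)"
| "ttsw a b (TLam t) = TLam (ttsw a b t)"
| "ttsw a b (TApp t c) = TApp (ttsw a b t) (asw a b c)"

lemma sw_simps[simp]: "sw a b a = b" "sw a b b = a" "x \<noteq> a \<Longrightarrow> x \<noteq> b \<Longrightarrow> sw a b x = x"
  "sw a b (sw a b x) = x"
  by (auto simp: sw_def)

lemma sw_inj[simp]: "(sw a b x = sw a b y) = (x = y)"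
  by (auto simp: sw_def)

lemma lca_mono: "lca j a \<Longrightarrow> j \<le> j' \<Longrightarrow> lca j' a"
  by (cases a) auto

lemma lcf_mono: "lcf j A \<Longrightarrow> j \<le> j' \<Longrightarrow> lcf j' A"
  by (induction A arbitrary: j j') (auto intro: lca_mono)

lemma lct_mono: "lct k j t \<Longrightarrow> k \<le> k' \<Longrightarrow> j \<le> j' \<Longrightarrow> lct k' j' t"
  by (induction t arbitrary: k j k' j') (auto intro: lca_mono lcf_mono)

lemma aopen_lca_id: "lca j a \<Longrightarrow> j \<le> j' \<Longrightarrow> aopen j' Y a = a"
  by (cases a) auto

lemma fopen_lcf_id: "lcf j A \<Longrightarrow> j \<le> j' \<Longrightarrow> fopen j' Y A = A"
  by (induction A arbitrary: j j') (auto simp: aopen_lca_id)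

lemma topen_lct_id: "lct k j t \<Longrightarrow> k \<le> k' \<Longrightarrow> topen k' u t = t"
  by (induction t arbitrary: k j k') auto

lemma ttopen_lct_id: "lct k j t \<Longrightarrow> j \<le> j' \<Longrightarrow> ttopen j' Y t = t"
  by (induction t arbitrary: k j j') (auto simp: fopen_lcf_id aopen_lca_id)

lemma lca_aopen: "lca (Suc j) a \<Longrightarrow> lca j (aopen j Y a)"
  by (cases a) auto

lemma lcf_fopen: "lcf (Suc j) A \<Longrightarrow> lcf j (fopen j Y A)"
  by (induction A arbitrary: j) (auto simp: lca_aopen)

lemma lct_topen: "lct (Suc k) j t \<Longrightarrow> lct k j u \<Longrightarrow> lct k j (topen k u t)"
proof (induction t arbitrary: k j u)
  case (Lam t)
  then show ?case using lct_mono[of k j u "Suc k" j] by auto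
next
  case (TLam t)
  then show ?case using lct_mono[of k j u k "Suc j"] by auto
qed auto

lemma lct_ttopen: "lct k (Suc j) t \<Longrightarrow> lct k j (ttopen j Y t)"
  by (induction t arbitrary: k j) (auto simp: lca_aopen lcf_fopen)

lemma lca_aclose: "lca j a \<Longrightarrow> lca (Suc j) (aclose j X a)"
  by (cases a) auto

lemma lcf_fclose: "lcf j A \<Longrightarrow> lcf (Suc j) (fclose j X A)"
  by (induction A arbitrary: j) (auto simp: lca_aclose)

lemma lct_tclose: "lct k j t \<Longrightarrow> lct (Suc k) j (tclose k x t)"
  by (induction t arbitrary: k j) auto

lemma lct_ttclose: "lct k j t \<Longrightarrow> lct k (Suc j) (ttclose j X t)"
  by (induction t arbitrary: k j) (auto simp: lca_aclose lcf_fclose)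

lemma aclose_aopen: "X \<notin> afv a \<Longrightarrow> aclose j X (aopen j X a) = a"
  by (cases a) auto

lemma fclose_fopen: "X \<notin> ffv A \<Longrightarrow> fclose j X (fopen j X A) = A"
  by (induction A arbitrary: j) (auto simp: aclose_aopen)

lemma aopen_aclose: "lca j a \<Longrightarrow> aopen j X (aclose j X a) = a"
  by (cases a) auto

lemma fopen_fclose: "lcf j A \<Longrightarrow> fopen j X (fclose j X A) = A"
  by (induction A arbitrary: j) (auto simp: aopen_aclose)

lemma tclose_topen: "x \<notin> tFV t \<Longrightarrow> tclose k x (topen k (FV x) t) = t"
  by (induction t arbitrary: k) auto

lemma topen_tclose: "lct k j t \<Longrightarrow> topen k (FV x) (tclose k x t) = t"
  by (induction t arbitrary: k j) auto

lemma ttclose_ttopen: "X \<notin> tatoms t \<Longrightarrow> ttclose j X (ttopen j X t) = t"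
  by (induction t arbitrary: j) (auto simp: aclose_aopen fclose_fopen)

lemma ttopen_ttclose: "lct k j t \<Longrightarrow> ttopen j X (ttclose j X t) = t"
  by (induction t arbitrary: k j) (auto simp: aopen_aclose fopen_fclose)

lemma tFV_tclose[simp]: "tFV (tclose k x t) = tFV t - {x}"
  by (induction t arbitrary: k) auto

lemma tFV_topen: "tFV (topen k u t) \<subseteq> tFV t \<union> tFV u"
  by (induction t arbitrary: k) auto

lemma tFV_topen2: "tFV t \<subseteq> tFV (topen k u t)"
  by (induction t arbitrary: k) auto

lemma tFV_ttopen[simp]: "tFV (ttopen j Y t) = tFV t"
  by (induction t arbitrary: j) auto

lemma tFV_ttclose[simp]: "tFV (ttclose j Y t) = tFV t"
  by (induction t arbitrary: j) auto

lemma afv_aclose[simp]: "afv (aclose j X a) = afv a - {X}"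
  by (cases a) auto

lemma ffv_fclose[simp]: "ffv (fclose j X A) = ffv A - {X}"
  by (induction A arbitrary: j) auto

lemma tatoms_ttclose[simp]: "tatoms (ttclose j X t) = tatoms t - {X}"
  by (induction t arbitrary: j) auto

lemma afv_aopen: "afv (aopen j Y a) \<subseteq> afv a \<union> {Y}"
  by (cases a) auto

lemma ffv_fopen: "ffv (fopen j Y A) \<subseteq> ffv A \<union> {Y}"
  by (induction A arbitrary: j) (use afv_aopen in fastforce)+

lemma afv_aopen2: "afv a \<subseteq> afv (aopen j Y a)"
  by (cases a) auto

lemma ffv_fopen2: "ffv A \<subseteq> ffv (fopen j Y A)"
  by (induction A arbitrary: j) (use afv_aopen2 in fastforce)+

lemma tatoms_ttopen: "tatoms (ttopen j Y t) \<subseteq> tatoms t \<union> {Y}"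
  by (induction t arbitrary: j) (use ffv_fopen afv_aopen in fastforce)+

lemma tatoms_ttopen2: "tatoms t \<subseteq> tatoms (ttopen j Y t)"
  by (induction t arbitrary: j) (use ffv_fopen2 afv_aopen2 in fastforce)+

lemma tatoms_topen: "tatoms (topen k u t) \<subseteq> tatoms t \<union> tatoms u"
  by (induction t arbitrary: k) auto

lemma tatoms_topen2: "tatoms t \<subseteq> tatoms (topen k u t)"
  by (induction t arbitrary: k) auto

lemma tatoms_tclose[simp]: "tatoms (tclose k x t) = tatoms t"
  by (induction t arbitrary: k) auto

lemma finite_afv[simp]: "finite (afv a)" by (cases a) auto
lemma finite_ffv[simp]: "finite (ffv A)" by (induction A) auto
lemma finite_tFV[simp]: "finite (tFV t)" by (induction t) auto
lemma finite_tatoms[simp]: "finite (tatoms t)" by (induction t) auto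

lemma size_topen_FV[simp]: "size (topen k (FV y) t) = size t"
  by (induction t arbitrary: k) auto

lemma size_ttopen[simp]: "size (ttopen j Y t) = size t"
  by (induction t arbitrary: j) auto

lemma fresh_nat: "finite (F::nat set) \<Longrightarrow> \<exists>x. x \<notin> F"
  using ex_new_if_finite infinite_UNIV_nat by blast

lemma ash_id: "lca j a \<Longrightarrow> j \<le> c \<Longrightarrow> ash c a = a"
  by (cases a) auto
lemma fsh_id: "lcf j A \<Longrightarrow> j \<le> c \<Longrightarrow> fsh c A = A"
  by (induction A arbitrary: j c) (auto simp: ash_id)
lemma sh_id: "lct k j t \<Longrightarrow> k \<le> c \<Longrightarrow> sh c t = t"
  by (induction t arbitrary: k j c) auto
lemma tsh_id: "lct k j t \<Longrightarrow> j \<le> c \<Longrightarrow> tsh c t = t"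
  by (induction t arbitrary: k j c) (auto simp: fsh_id ash_id)

lemma sh_id0: "lct 0 j t \<Longrightarrow> sh c t = t" using sh_id by blast
lemma tsh_id0: "lct k 0 t \<Longrightarrow> tsh c t = t" using tsh_id by blast

lemma lct_sh: "lct k j m \<Longrightarrow> lct (Suc k) j (sh c m)"
  by (induction m arbitrary: k j c) auto
lemma lca_ash: "lca j a \<Longrightarrow> lca (Suc j) (ash c a)"
  by (cases a) auto
lemma lcf_fsh: "lcf j A \<Longrightarrow> lcf (Suc j) (fsh c A)"
  by (induction A arbitrary: j c) (auto simp: lca_ash)
lemma lct_tsh: "lct k j m \<Longrightarrow> lct k (Suc j) (tsh c m)"
  by (induction m arbitrary: k j c) (auto simp: lca_ash lcf_fsh)

lemma topen_sh: "c \<le> k \<Longrightarrow> lct 0 0 s \<Longrightarrow> topen (Suc k) s (sh c m) = sh c (topen k s m)"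
  by (induction m arbitrary: c k) (auto simp: sh_id0)

lemma topen_tsh: "lct 0 0 s \<Longrightarrow> topen k s (tsh c m) = tsh c (topen k s m)"
  by (induction m arbitrary: c k) (auto simp: tsh_id0)

lemma ttopen_sh: "ttopen j Y (sh c m) = sh c (ttopen j Y m)"
  by (induction m arbitrary: c j) auto

lemma aopen_ash: "c \<le> j \<Longrightarrow> aopen (Suc j) Y (ash c a) = ash c (aopen j Y a)"
  by (cases a) auto
lemma fopen_fsh: "c \<le> j \<Longrightarrow> fopen (Suc j) Y (fsh c A) = fsh c (fopen j Y A)"
  by (induction A arbitrary: c j) (auto simp: aopen_ash)
lemma ttopen_tsh: "c \<le> j \<Longrightarrow> ttopen (Suc j) Y (tsh c m) = tsh c (ttopen j Y m)"
  by (induction m arbitrary: c j) (auto simp: aopen_ash fopen_fsh)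

lemma tclose_sh: "c \<le> k \<Longrightarrow> tclose (Suc k) x (sh c m) = sh c (tclose k x m)"
  by (induction m arbitrary: c k) auto
lemma tclose_tsh: "tclose k x (tsh c m) = tsh c (tclose k x m)"
  by (induction m arbitrary: c k) auto
lemma ttclose_sh: "ttclose j X (sh c m) = sh c (ttclose j X m)"
  by (induction m arbitrary: c j) auto
lemma aclose_ash: "c \<le> j \<Longrightarrow> aclose (Suc j) X (ash c a) = ash c (aclose j X a)"
  by (cases a) auto
lemma fclose_fsh: "c \<le> j \<Longrightarrow> fclose (Suc j) X (fsh c A) = fsh c (fclose j X A)"
  by (induction A arbitrary: c j) (auto simp: aclose_ash)
lemma ttclose_tsh: "c \<le> j \<Longrightarrow> ttclose (Suc j) X (tsh c m) = tsh c (ttclose j X m)"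
  by (induction m arbitrary: c j) (auto simp: aclose_ash fclose_fsh)

lemma tFV_sh[simp]: "tFV (sh c m) = tFV m" by (induction m arbitrary: c) auto
lemma tFV_tsh[simp]: "tFV (tsh c m) = tFV m" by (induction m arbitrary: c) auto
lemma afv_ash[simp]: "afv (ash c a) = afv a" by (cases a) auto
lemma ffv_fsh[simp]: "ffv (fsh c A) = ffv A" by (induction A arbitrary: c) auto
lemma tatoms_sh[simp]: "tatoms (sh c m) = tatoms m" by (induction m arbitrary: c) auto
lemma tatoms_tsh[simp]: "tatoms (tsh c m) = tatoms m" by (induction m arbitrary: c) auto
fun tsz :: "trm \<Rightarrow> nat" where
  "tsz (FV x) = 1"
| "tsz (BV i) = 1"
| "tsz (Con A) = 1"
| "tsz (Lam t) = Suc (tsz t)"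
| "tsz (App t s) = Suc (tsz t + tsz s)"
| "tsz (TLam t) = Suc (tsz t)"
| "tsz (TApp t a) = Suc (tsz t)"

fun fsz :: "form \<Rightarrow> nat" where
  "fsz (At a) = 1"
| "fsz (Imp A B) = Suc (fsz A + fsz B)"
| "fsz (All A) = Suc (fsz A)"

lemma fsz_fopen[simp]: "fsz (fopen j Y A) = fsz A"
  by (induction A arbitrary: j) auto
lemma tsz_pos: "0 < tsz t" by (cases t) auto
lemma tsz_sh[simp]: "tsz (sh c m) = tsz m" by (induction m arbitrary: c) auto
lemma tsz_tsh[simp]: "tsz (tsh c m) = tsz m" by (induction m arbitrary: c) auto
lemma tsz_topen_FV[simp]: "tsz (topen k (FV y) t) = tsz t"
  by (induction t arbitrary: k) auto
lemma tsz_ttopen[simp]: "tsz (ttopen j Y t) = tsz t"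
  by (induction t arbitrary: j) auto

lemma sh_Lam_iff: "(sh c m = Lam b) = (\<exists>b'. m = Lam b' \<and> b = sh (Suc c) b')"
  by (cases m) auto
lemma sh_TLam_iff: "(sh c m = TLam b) = (\<exists>b'. m = TLam b' \<and> b = sh c b')"
  by (cases m) auto
lemma tsh_Lam_iff: "(tsh c m = Lam b) = (\<exists>b'. m = Lam b' \<and> b = tsh c b')"
  by (cases m) auto
lemma tsh_TLam_iff: "(tsh c m = TLam b) = (\<exists>b'. m = TLam b' \<and> b = tsh (Suc c) b')"
  by (cases m) auto

lemma normal_sh[simp]: "normal (sh c m) = normal m"
  by (induction m arbitrary: c) (auto simp: sh_Lam_iff sh_TLam_iff)
lemma normal_tsh[simp]: "normal (tsh c m) = normal m"
  by (induction m arbitrary: c) (auto simp: tsh_Lam_iff tsh_TLam_iff)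

section \<open>Eta-expansion of neutral terms\<close>

fun E :: "form \<Rightarrow> trm \<Rightarrow> trm" where
  "E (At a) n = n"
| "E (Imp B C) n = Lam (E C (App (sh 0 n) (BV 0)))"
| "E (All A) n = TLam (E A (TApp (tsh 0 n) (BA 0)))"

lemma E_topen: "lct 0 0 s \<Longrightarrow> topen k s (E C m) = E C (topen k s m)"
  by (induction C arbitrary: k m) (auto simp: topen_sh topen_tsh)

lemma E_ttopen: "ttopen j Y (E C m) = E C (ttopen j Y m)"
  by (induction C arbitrary: j m) (auto simp: ttopen_sh ttopen_tsh)

lemma E_tclose: "tclose k x (E C m) = E C (tclose k x m)"
  by (induction C arbitrary: k m) (auto simp: tclose_sh tclose_tsh)

lemma E_ttclose: "ttclose j X (E C m) = E C (ttclose j X m)"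
  by (induction C arbitrary: j m) (auto simp: ttclose_sh ttclose_tsh)

lemma E_fopen[simp]: "E (fopen j Y C) m = E C m"
proof (induction C arbitrary: j m)
  case (At a) then show ?case by simp
next
  case (Imp B C) then show ?case by simp
next
  case (All A) then show ?case by simp
qed

lemma E_lct: "lct k j m \<Longrightarrow> lct k j (E C m)"
  by (induction C arbitrary: k j m) (auto simp: lct_sh lct_tsh)

lemma E_tFV[simp]: "tFV (E C m) = tFV m"
  by (induction C arbitrary: m) auto

lemma E_tatoms[simp]: "tatoms (E C m) = tatoms m"
  by (induction C arbitrary: m) auto

lemma E_size: "tsz m \<le> tsz (E C m)"
proof (induction C arbitrary: m)
  case (Imp B C)
  then show ?case using Imp.IH(2)[of "App (sh 0 m) (BV 0)"] by simp
next
  case (All A)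
  then show ?case using All.IH[of "TApp (tsh 0 m) (BA 0)"] by simp
qed auto

lemma E_size_Imp: "tsz m < tsz (E (Imp B C) m)"
  using E_size[of "App (sh 0 m) (BV 0)" C] by simp
lemma E_size_All: "tsz m < tsz (E (All A) m)"
  using E_size[of "TApp (tsh 0 m) (BA 0)" A] by simp

lemma E_normal: "normal (E C m) \<Longrightarrow> normal m"
proof (induction C arbitrary: m)
  case (Imp B C)
  have "normal (E C (App (sh 0 m) (BV 0)))" using Imp.prems by simp
  then have "normal (App (sh 0 m) (BV 0))" by (rule Imp.IH(2))
  then show ?case by (simp only: normal.simps normal_sh)
next
  case (All A)
  have "normal (E A (TApp (tsh 0 m) (BA 0)))" using All.prems by simp
  then have "normal (TApp (tsh 0 m) (BA 0))" by (rule All.IH)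
  then show ?case by (simp only: normal.simps normal_tsh)
qed simp

lemma E_Imp_open: "lct 0 0 s \<Longrightarrow> lct 0 0 m \<Longrightarrow>
   topen 0 s (E C (App (sh 0 m) (BV 0))) = E C (App m s)"
  by (simp add: E_topen sh_id0 topen_lct_id)

lemma E_All_open: "lct 0 0 m \<Longrightarrow> ttopen 0 Y (E C (TApp (tsh 0 m) (BA 0))) = E C (TApp m (FA Y))"
  by (simp add: E_ttopen tsh_id0 ttopen_lct_id)

lemma tsw_topen: "tsw a b (topen k u t) = topen k (tsw a b u) (tsw a b t)"
  by (induction t arbitrary: k) auto
lemma tsw_tclose: "tsw a b (tclose k x t) = tclose k (sw a b x) (tsw a b t)"
  by (induction t arbitrary: k) auto
lemma tsw_ttopen: "tsw a b (ttopen j Y t) = ttopen j Y (tsw a b t)"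
  by (induction t arbitrary: j) auto
lemma tsw_ttclose: "tsw a b (ttclose j Y t) = ttclose j Y (tsw a b t)"
  by (induction t arbitrary: j) auto
lemma lct_tsw[simp]: "lct k j (tsw a b t) = lct k j t"
  by (induction t arbitrary: k j) auto
lemma tFV_tsw: "tFV (tsw a b t) = sw a b ` tFV t"
  by (induction t) auto
lemma tsw_id: "a \<notin> tFV t \<Longrightarrow> b \<notin> tFV t \<Longrightarrow> tsw a b t = t"
  by (induction t) auto
lemma tatoms_tsw[simp]: "tatoms (tsw a b t) = tatoms t"
  by (induction t) auto

lemma asw_aopen: "asw a b (aopen j Y c) = aopen j (sw a b Y) (asw a b c)"
  by (cases c) auto
lemma fsw_fopen: "fsw a b (fopen j Y A) = fopen j (sw a b Y) (fsw a b A)"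
  by (induction A arbitrary: j) (auto simp: asw_aopen)
lemma asw_aclose: "asw a b (aclose j Y c) = aclose j (sw a b Y) (asw a b c)"
  by (cases c) auto
lemma fsw_fclose: "fsw a b (fclose j Y A) = fclose j (sw a b Y) (fsw a b A)"
  by (induction A arbitrary: j) (auto simp: asw_aclose)
lemma ttsw_ttopen: "ttsw a b (ttopen j Y t) = ttopen j (sw a b Y) (ttsw a b t)"
  by (induction t arbitrary: j) (auto simp: asw_aopen fsw_fopen)
lemma ttsw_ttclose: "ttsw a b (ttclose j Y t) = ttclose j (sw a b Y) (ttsw a b t)"
  by (induction t arbitrary: j) (auto simp: asw_aclose fsw_fclose)
lemma ttsw_topen: "ttsw a b (topen k u t) = topen k (ttsw a b u) (ttsw a b t)"
  by (induction t arbitrary: k) auto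
lemma ttsw_tclose: "ttsw a b (tclose k x t) = tclose k x (ttsw a b t)"
  by (induction t arbitrary: k) auto
lemma lca_asw[simp]: "lca j (asw a b c) = lca j c" by (cases c) auto
lemma lcf_fsw[simp]: "lcf j (fsw a b A) = lcf j A" by (induction A arbitrary: j) auto
lemma lct_ttsw[simp]: "lct k j (ttsw a b t) = lct k j t"
  by (induction t arbitrary: k j) auto
lemma afv_asw: "afv (asw a b c) = sw a b ` afv c" by (cases c) auto
lemma ffv_fsw: "ffv (fsw a b A) = sw a b ` ffv A"
  by (induction A) (auto simp: afv_asw image_Un)
lemma tatoms_ttsw: "tatoms (ttsw a b t) = sw a b ` tatoms t"
  by (induction t) (auto simp: afv_asw ffv_fsw image_Un)
lemma asw_id: "a \<notin> afv c \<Longrightarrow> b \<notin> afv c \<Longrightarrow> asw a b c = c" by (cases c) auto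
lemma fsw_id: "a \<notin> ffv A \<Longrightarrow> b \<notin> ffv A \<Longrightarrow> fsw a b A = A"
  by (induction A) (auto simp: asw_id)
lemma ttsw_id: "a \<notin> tatoms t \<Longrightarrow> b \<notin> tatoms t \<Longrightarrow> ttsw a b t = t"
  by (induction t) (auto simp: asw_id fsw_id)
lemma tFV_ttsw[simp]: "tFV (ttsw a b t) = tFV t" by (induction t) auto
lemma fsw_inv[simp]: "fsw a b (fsw a b A) = A"
proof (induction A)
  case (At c) then show ?case by (cases c) auto
qed auto

lemma beta_wf: "beta t t' \<Longrightarrow> wf_trm t \<and> wf_trm t'"
proof (induction rule: beta.induct)
  case (beta_lam t s)
  then show ?case by (auto simp: wf_trm_def intro: lct_topen)
next
  case (beta_tlam t Y)
  then show ?case by (auto simp: wf_trm_def intro: lct_ttopen)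
next
  case (cong_lam t t' x)
  then show ?case by (auto simp: wf_trm_def intro: lct_tclose)
next
  case (cong_tlam t t' X)
  then show ?case by (auto simp: wf_trm_def intro: lct_ttclose)
qed (auto simp: wf_trm_def)

lemma beta_tFV: "beta t t' \<Longrightarrow> tFV t' \<subseteq> tFV t"
  by (induction rule: beta.induct) (use tFV_topen in auto)

lemma beta_tatoms: "beta t t' \<Longrightarrow> tatoms t' \<subseteq> tatoms t"
  by (induction rule: beta.induct) (use tatoms_ttopen tatoms_topen in fastforce)+

fun catoms :: "trm \<Rightarrow> nat set" where
  "catoms (FV x) = {}"
| "catoms (BV i) = {}"
| "catoms (Con A) = ffv A"
| "catoms (Lam t) = catoms t"
| "catoms (App t s) = catoms t \<union> catoms s"
| "catoms (TLam t) = catoms t"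
| "catoms (TApp t a) = catoms t"

lemma pt_ttopen: "proof_term S t \<Longrightarrow> proof_term S (ttopen j Y t) \<and> catoms (ttopen j Y t) = catoms t"
  by (induction t arbitrary: j) auto

lemma pt_ttclose: "proof_term S (ttclose j X t) = (proof_term S t \<and> X \<notin> catoms t)"
proof (induction t arbitrary: j)
  case (Con A)
  show ?case
  proof (cases A)
    case (At a) then show ?thesis by (cases a) auto
  qed auto
qed auto

lemma catoms_ttclose[simp]: "catoms (ttclose j X t) = catoms t - {X}"
  by (induction t arbitrary: j) auto

lemma pt_topen: "proof_term S t \<Longrightarrow> proof_term S u \<Longrightarrow> proof_term S (topen k u t)"
  by (induction t arbitrary: k) auto
lemma catoms_topen: "catoms (topen k u t) \<subseteq> catoms t \<union> catoms u"
  by (induction t arbitrary: k) auto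
lemma pt_tclose[simp]: "proof_term S (tclose k x t) = proof_term S t"
  by (induction t arbitrary: k) auto
lemma catoms_tclose[simp]: "catoms (tclose k x t) = catoms t"
  by (induction t arbitrary: k) auto

lemma beta_pt: "beta t t' \<Longrightarrow> proof_term S t \<Longrightarrow> proof_term S t' \<and> catoms t' \<subseteq> catoms t"
proof (induction rule: beta.induct)
  case (beta_lam t s)
  then show ?case using pt_topen catoms_topen by fastforce
next
  case (beta_tlam t Y)
  then show ?case using pt_ttopen by auto
next
  case (cong_tlam t t' X)
  then show ?case using pt_ttclose by auto
qed auto

inductive spine :: "trm \<Rightarrow> bool" where
  "spine (FV x)"
| "spine (Con A)"
| "spine n \<Longrightarrow> spine (App n w)"
| "spine n \<Longrightarrow> spine (TApp n a)"

lemma spine_simps[simp]: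
  "spine (FV x)" "spine (Con A)" "spine (App n w) = spine n" "spine (TApp n a) = spine n"
  "\<not> spine (Lam b)" "\<not> spine (TLam b)" "\<not> spine (BV i)"
  by (auto intro: spine.intros elim: spine.cases)

lemma beta_App_cases:
  assumes "beta (App t s) w"
  shows "(\<exists>b. t = Lam b \<and> w = topen 0 s b) \<or> (\<exists>t'. beta t t' \<and> w = App t' s) \<or> (\<exists>s'. beta s s' \<and> w = App t s')"
  using assms by (cases rule: beta.cases) auto

lemma beta_TApp_cases:
  assumes "beta (TApp t a) w"
  shows "(\<exists>b Y. t = TLam b \<and> a = FA Y \<and> w = ttopen 0 Y b) \<or> (\<exists>t'. beta t t' \<and> w = TApp t' a)"
  using assms by (cases rule: beta.cases) auto

lemma beta_Lam_cases:
  assumes "beta (Lam b) w"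
  shows "\<exists>x t t'. b = tclose 0 x t \<and> w = Lam (tclose 0 x t') \<and> beta t t'"
  using assms by (cases rule: beta.cases) auto

lemma beta_TLam_cases:
  assumes "beta (TLam b) w"
  shows "\<exists>X t t'. b = ttclose 0 X t \<and> w = TLam (ttclose 0 X t') \<and> beta t t'"
  using assms by (cases rule: beta.cases) auto

lemma beta_FV[simp]: "\<not> beta (FV x) w" by (auto elim: beta.cases)
lemma beta_Con[simp]: "\<not> beta (Con A) w" by (auto elim: beta.cases)
lemma beta_BV[simp]: "\<not> beta (BV i) w" by (auto elim: beta.cases)

lemma beta_spine: "beta n n' \<Longrightarrow> spine n \<Longrightarrow> spine n'"
  by (induction rule: beta.induct) auto

lemma beta_tsw: "beta t t' \<Longrightarrow> beta (tsw a b t) (tsw a b t')"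
proof (induction rule: beta.induct)
  case (beta_lam t s)
  then show ?case using beta.beta_lam[of "tsw a b t" "tsw a b s"]
    by (auto simp: wf_trm_def tsw_topen)
next
  case (beta_tlam t Y)
  then show ?case using beta.beta_tlam[of "tsw a b t" Y]
    by (auto simp: wf_trm_def tsw_ttopen)
next
  case (cong_lam t t' x)
  then show ?case by (auto simp: tsw_tclose intro: beta.cong_lam)
next
  case (cong_appL t t' s)
  then show ?case by (auto simp: wf_trm_def intro: beta.cong_appL)
next
  case (cong_appR s s' t)
  then show ?case by (auto simp: wf_trm_def intro: beta.cong_appR)
next
  case (cong_tlam t t' X)
  then show ?case by (auto simp: tsw_ttclose intro: beta.cong_tlam)
next
  case (cong_tapp t t' Y)
  then show ?case by (auto intro: beta.cong_tapp)
qed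

lemma beta_ttsw: "beta t t' \<Longrightarrow> beta (ttsw a b t) (ttsw a b t')"
proof (induction rule: beta.induct)
  case (beta_lam t s)
  then show ?case using beta.beta_lam[of "ttsw a b t" "ttsw a b s"]
    by (auto simp: wf_trm_def ttsw_topen)
next
  case (beta_tlam t Y)
  then show ?case using beta.beta_tlam[of "ttsw a b t" "sw a b Y"]
    by (auto simp: wf_trm_def ttsw_ttopen)
next
  case (cong_lam t t' x)
  then show ?case by (auto simp: ttsw_tclose intro: beta.cong_lam)
next
  case (cong_appL t t' s)
  then show ?case by (auto simp: wf_trm_def intro: beta.cong_appL)
next
  case (cong_appR s s' t)
  then show ?case by (auto simp: wf_trm_def intro: beta.cong_appR)
next
  case (cong_tlam t t' X)
  then show ?case by (auto simp: ttsw_ttclose intro: beta.cong_tlam)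
next
  case (cong_tapp t t' Y)
  then show ?case by (auto intro: beta.cong_tapp)
qed

lemma betas_wf: "betas t t' \<Longrightarrow> wf_trm t \<Longrightarrow> wf_trm t'"
  by (induction rule: rtranclp_induct) (auto dest: beta_wf)

lemma betas_tFV: "betas t t' \<Longrightarrow> tFV t' \<subseteq> tFV t"
  by (induction rule: rtranclp_induct) (auto dest: beta_tFV)

lemma betas_tatoms: "betas t t' \<Longrightarrow> tatoms t' \<subseteq> tatoms t"
  by (induction rule: rtranclp_induct) (auto dest: beta_tatoms)

lemma betas_pt: "betas t t' \<Longrightarrow> proof_term S t \<Longrightarrow> proof_term S t'"
  by (induction rule: rtranclp_induct) (auto dest: beta_pt)

lemma betas_appL: "betas t t' \<Longrightarrow> wf_trm s \<Longrightarrow> betas (App t s) (App t' s)"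
  by (induction rule: rtranclp_induct) (auto intro: rtranclp.rtrancl_into_rtrancl beta.cong_appL)

lemma betas_appR: "betas s s' \<Longrightarrow> wf_trm t \<Longrightarrow> betas (App t s) (App t s')"
  by (induction rule: rtranclp_induct) (auto intro: rtranclp.rtrancl_into_rtrancl beta.cong_appR)

lemma betas_tapp: "betas t t' \<Longrightarrow> betas (TApp t (FA Y)) (TApp t' (FA Y))"
  by (induction rule: rtranclp_induct) (auto intro: rtranclp.rtrancl_into_rtrancl beta.cong_tapp)

lemma betas_lam: "betas t t' \<Longrightarrow> betas (Lam (tclose 0 x t)) (Lam (tclose 0 x t'))"
  by (induction rule: rtranclp_induct) (auto intro: rtranclp.rtrancl_into_rtrancl beta.cong_lam)

lemma betas_tlam: "betas t t' \<Longrightarrow> betas (TLam (ttclose 0 X t)) (TLam (ttclose 0 X t'))"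
  by (induction rule: rtranclp_induct) (auto intro: rtranclp.rtrancl_into_rtrancl beta.cong_tlam)

lemma tclose_Lam_iff: "(tclose k x t = Lam b) = (\<exists>b'. t = Lam b' \<and> b = tclose (Suc k) x b')"
  by (cases t) auto
lemma tclose_TLam_iff: "(tclose k x t = TLam b) = (\<exists>b'. t = TLam b' \<and> b = tclose k x b')"
  by (cases t) auto
lemma ttclose_Lam_iff: "(ttclose k x t = Lam b) = (\<exists>b'. t = Lam b' \<and> b = ttclose k x b')"
  by (cases t) auto
lemma ttclose_TLam_iff: "(ttclose k x t = TLam b) = (\<exists>b'. t = TLam b' \<and> b = ttclose (Suc k) x b')"
  by (cases t) auto

lemma normal_tclose: "normal t \<Longrightarrow> normal (tclose k x t)"
proof (induction t arbitrary: k)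
  case (App t1 t2)
  then show ?case by (simp only: normal.simps tclose.simps tclose_Lam_iff) blast
next
  case (TApp t1 a)
  then show ?case by (simp only: normal.simps tclose.simps tclose_TLam_iff) blast
qed auto

lemma normal_ttclose: "normal t \<Longrightarrow> normal (ttclose k x t)"
proof (induction t arbitrary: k)
  case (App t1 t2)
  then show ?case by (simp only: normal.simps ttclose.simps ttclose_Lam_iff) blast
next
  case (TApp t1 a)
  then show ?case by (simp only: normal.simps ttclose.simps ttclose_TLam_iff) blast
qed auto

lemma wf_ctx_upd: "wf_ctx \<Gamma> \<Longrightarrow> wf_form A \<Longrightarrow> wf_ctx (\<Gamma>(x \<mapsto> A))"
  unfolding wf_ctx_def by (auto simp: ran_def)

lemma wf_ctx_upd_rev: "wf_ctx (\<Gamma>(x \<mapsto> A)) \<Longrightarrow> x \<notin> dom \<Gamma> \<Longrightarrow> wf_ctx \<Gamma>"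
  unfolding wf_ctx_def ran_def by (auto split: if_splits) (metis option.distinct(1))

lemma derivable_wf: "derivable \<Delta> t A \<Longrightarrow> wf_ctx \<Delta> \<and> wf_trm t \<and> wf_form A"
proof (induction rule: derivable.induct)
  case (ax \<Gamma> x A)
  then have "A \<in> ran \<Gamma>" by (auto intro: ranI)
  then show ?case using ax by (auto simp: wf_ctx_def wf_trm_def wf_form_def)
next
  case (const \<Gamma> A)
  then show ?case by (auto simp: wf_trm_def wf_form_def)
next
  case (impI x \<Gamma> A t B)
  have "wf_ctx \<Gamma>" using wf_ctx_upd_rev[of \<Gamma> x A] impI.IH impI.hyps(1) by blast
  then show ?case using impI lct_tclose[of 0 0 t x]
    by (auto simp: wf_trm_def wf_form_def)
next
  case (impE \<Gamma> t A B s)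
  then show ?case by (auto simp: wf_trm_def wf_form_def)
next
  case (allI \<Gamma> t A X)
  then show ?case using lct_ttclose[of 0 0 t X] lcf_fclose[of 0 A X]
    by (auto simp: wf_trm_def wf_form_def)
next
  case (allE \<Gamma> t A Y)
  then show ?case using lcf_fopen[of 0 A Y] by (auto simp: wf_trm_def wf_form_def)
qed

lemma PFV_finite: "wf_ctx \<Delta> \<Longrightarrow> finite (PFV \<Delta>)"
proof -
  assume "wf_ctx \<Delta>"
  then have "finite (ran \<Delta>)" using finite_ran by (auto simp: wf_ctx_def)
  then show ?thesis unfolding PFV_def by auto
qed

lemma ran_comp_sw: "ran (\<Delta> \<circ> sw a b) = ran \<Delta>"
  unfolding ran_def by auto (metis sw_simps(4))

lemma dom_comp_sw: "dom (\<Delta> \<circ> sw a b) = sw a b ` dom \<Delta>"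
proof
  show "dom (\<Delta> \<circ> sw a b) \<subseteq> sw a b ` dom \<Delta>"
  proof
    fix x assume "x \<in> dom (\<Delta> \<circ> sw a b)"
    then have "sw a b x \<in> dom \<Delta>" by auto
    then show "x \<in> sw a b ` dom \<Delta>" by (metis image_eqI sw_simps(4))
  qed
  show "sw a b ` dom \<Delta> \<subseteq> dom (\<Delta> \<circ> sw a b)" by auto
qed

lemma derivable_tsw: "derivable \<Delta> t A \<Longrightarrow> derivable (\<Delta> \<circ> sw a b) (tsw a b t) A"
proof (induction rule: derivable.induct)
  case (ax \<Gamma> x A)
  have w: "wf_ctx (\<Gamma> \<circ> sw a b)" using ax(1) by (auto simp: wf_ctx_def ran_comp_sw dom_comp_sw)
  have "(\<Gamma> \<circ> sw a b) (sw a b x) = Some A" using ax(2) by simp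
  from derivable.ax[OF w this] show ?case by simp
next
  case (const \<Gamma> A)
  have w: "wf_ctx (\<Gamma> \<circ> sw a b)" using const(1) by (auto simp: wf_ctx_def ran_comp_sw dom_comp_sw)
  from derivable.const[OF w const(2)] show ?case by (simp only: tsw.simps)
next
  case (impI x \<Gamma> A t B)
  have e: "\<Gamma>(x \<mapsto> A) \<circ> sw a b = (\<Gamma> \<circ> sw a b)(sw a b x \<mapsto> A)"
  proof (rule ext)
    fix y show "(\<Gamma>(x \<mapsto> A) \<circ> sw a b) y = ((\<Gamma> \<circ> sw a b)(sw a b x \<mapsto> A)) y"
    proof (cases "y = sw a b x")
      case False
      then have "sw a b y \<noteq> x" by (metis sw_simps(4))
      then show ?thesis using False by simp
    qed simp
  qed
  have 1: "sw a b x \<notin> dom (\<Gamma> \<circ> sw a b)" using impI(1) by (auto simp: dom_comp_sw)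
  from impI.IH have 3: "derivable ((\<Gamma> \<circ> sw a b)(sw a b x \<mapsto> A)) (tsw a b t) B"
    by (simp only: e)
  from derivable.impI[OF 1 impI.hyps(2) 3] show ?case by (simp only: tsw.simps tsw_tclose)
next
  case (impE \<Gamma> t A B s)
  then show ?case by (auto intro: derivable.impE)
next
  case (allI \<Gamma> t A X)
  have "PFV (\<Gamma> \<circ> sw a b) = PFV \<Gamma>" by (simp add: PFV_def ran_comp_sw)
  then have 2: "X \<notin> PFV (\<Gamma> \<circ> sw a b)" using allI.hyps(2) by simp
  from derivable.allI[OF allI.IH 2] show ?case by (simp only: tsw.simps tsw_ttclose)
next
  case (allE \<Gamma> t A Y)
  then show ?case by (auto intro: derivable.allE)
qed

definition csw :: "nat \<Rightarrow> nat \<Rightarrow> ctx \<Rightarrow> ctx" where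
  "csw a b \<Delta> = map_option (fsw a b) \<circ> \<Delta>"

lemma dom_csw[simp]: "dom (csw a b \<Delta>) = dom \<Delta>"
  by (auto simp: csw_def dom_def)
lemma ran_csw: "ran (csw a b \<Delta>) = fsw a b ` ran \<Delta>"
  by (auto simp: csw_def ran_def)
lemma PFV_csw: "PFV (csw a b \<Delta>) = sw a b ` PFV \<Delta>"
  by (auto simp: PFV_def ran_csw ffv_fsw)
lemma wf_ctx_csw: "wf_ctx \<Delta> \<Longrightarrow> wf_ctx (csw a b \<Delta>)"
  by (auto simp: wf_ctx_def ran_csw wf_form_def)
lemma csw_upd: "csw a b (\<Delta>(x \<mapsto> A)) = (csw a b \<Delta>)(x \<mapsto> fsw a b A)"
  by (auto simp: csw_def)
lemma csw_app: "\<Delta> x = Some A \<Longrightarrow> csw a b \<Delta> x = Some (fsw a b A)"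
  by (auto simp: csw_def)

lemma derivable_ttsw: "derivable \<Delta> t A \<Longrightarrow> derivable (csw a b \<Delta>) (ttsw a b t) (fsw a b A)"
proof (induction rule: derivable.induct)
  case (ax \<Gamma> x A)
  then show ?case by (auto intro!: derivable.ax wf_ctx_csw csw_app)
next
  case (const \<Gamma> A)
  then show ?case by (auto intro!: derivable.const wf_ctx_csw simp: wf_form_def)
next
  case (impI x \<Gamma> A t B)
  have 1: "x \<notin> dom (csw a b \<Gamma>)" using impI(1) by simp
  have 2: "wf_form (fsw a b A)" using impI(2) by (simp add: wf_form_def)
  have 3: "derivable ((csw a b \<Gamma>)(x \<mapsto> fsw a b A)) (ttsw a b t) (fsw a b B)"
    using impI(4) by (simp only: csw_upd)
  from derivable.impI[OF 1 2 3] show ?case by (simp add: ttsw_tclose)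
next
  case (impE \<Gamma> t A B s)
  then show ?case by (auto intro: derivable.impE)
next
  case (allI \<Gamma> t A X)
  have "sw a b X \<notin> PFV (csw a b \<Gamma>)" using allI.hyps(2) by (auto simp: PFV_csw)
  then show ?case using allI derivable.allI[of "csw a b \<Gamma>" "ttsw a b t" "fsw a b A" "sw a b X"]
    by (auto simp: ttsw_ttclose fsw_fclose)
next
  case (allE \<Gamma> t A Y)
  then show ?case using derivable.allE[of "csw a b \<Gamma>" "ttsw a b t" "fsw a b A" "sw a b Y"]
    by (auto simp: fsw_fopen)
qed

lemma derivable_strengthen: "derivable \<Delta> t A \<Longrightarrow> z \<notin> tFV t \<Longrightarrow> derivable (\<Delta>(z := None)) t A"
proof (induction rule: derivable.induct)
  case (ax \<Gamma> x A)
  have w: "wf_ctx (\<Gamma>(z := None))" using ax(1) unfolding wf_ctx_def ran_def by auto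
  have "(\<Gamma>(z := None)) x = Some A" using ax by auto
  from derivable.ax[OF w this] show ?case .
next
  case (const \<Gamma> A)
  have w: "wf_ctx (\<Gamma>(z := None))" using const(1) unfolding wf_ctx_def ran_def by auto
  from derivable.const[OF w const(2)] show ?case .
next
  case (impI x \<Gamma> A t B)
  show ?case
  proof (cases "z = x")
    case True
    then have "\<Gamma>(z := None) = \<Gamma>" using impI(1) by auto
    then show ?thesis using derivable.impI[OF impI(1-3)] by simp
  next
    case False
    then have "(\<Gamma>(x \<mapsto> A))(z := None) = (\<Gamma>(z := None))(x \<mapsto> A)" by auto
    moreover have "z \<notin> tFV t" using impI(5) False by auto
    ultimately have 3: "derivable ((\<Gamma>(z := None))(x \<mapsto> A)) t B" using impI(4) by metis
    have 1: "x \<notin> dom (\<Gamma>(z := None))" using impI(1) by auto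
    from derivable.impI[OF 1 impI(2) 3] show ?thesis .
  qed
next
  case (impE \<Gamma> t A B s)
  then show ?case by (auto intro: derivable.impE)
next
  case (allI \<Gamma> t A X)
  have "PFV (\<Gamma>(z := None)) \<subseteq> PFV \<Gamma>" unfolding PFV_def ran_def by auto
  then have 2: "X \<notin> PFV (\<Gamma>(z := None))" using allI.hyps(2) by blast
  have "z \<notin> tFV t" using allI.prems by simp
  from allI.IH[OF this] have 1: "derivable (\<Gamma>(z := None)) t A" .
  from derivable.allI[OF 1 2] show ?case .
next
  case (allE \<Gamma> t A Y)
  then show ?case by (auto intro: derivable.allE)
qed

lemma inv_FV: "derivable \<Delta> (FV x) A \<Longrightarrow> \<Delta> x = Some A"
  by (auto elim: derivable.cases)
lemma inv_Con: "derivable \<Delta> (Con F) A \<Longrightarrow> F = A"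
  by (auto elim: derivable.cases)
lemma inv_BV: "\<not> derivable \<Delta> (BV i) A"
  by (auto elim: derivable.cases)
lemma inv_App: "derivable \<Delta> (App t s) B \<Longrightarrow> \<exists>A. derivable \<Delta> t (Imp A B) \<and> derivable \<Delta> s A"
  by (auto elim: derivable.cases)
lemma inv_TApp: "derivable \<Delta> (TApp t a) B \<Longrightarrow> \<exists>Y F. a = FA Y \<and> derivable \<Delta> t (All F) \<and> B = fopen 0 Y F"
  by (erule derivable.cases) blast+

lemma inv_Lam:
  assumes "derivable \<Delta> (Lam b) A"
  shows "\<exists>A1 A2 L. A = Imp A1 A2 \<and> wf_form A1 \<and> finite L \<and>
     (\<forall>z. z \<notin> L \<longrightarrow> derivable (\<Delta>(z \<mapsto> A1)) (topen 0 (FV z) b) A2)"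
  using assms
proof (cases rule: derivable.cases)
  case (impI x A1 t A2)
  let ?L = "dom \<Delta> \<union> tFV b \<union> {x}"
  have fin: "finite ?L" using derivable_wf[OF assms] by (auto simp: wf_ctx_def)
  have lt: "lct 0 0 t" using derivable_wf[OF impI(5)] by (auto simp: wf_trm_def)
  have tb: "t = topen 0 (FV x) b" using impI(1) topen_tclose[OF lt] by simp
  have xb: "x \<notin> tFV b" using impI(1) by simp
  have H: "\<forall>z. z \<notin> ?L \<longrightarrow> derivable (\<Delta>(z \<mapsto> A1)) (topen 0 (FV z) b) A2"
  proof (intro HOL.allI HOL.impI)
    fix z assume z: "z \<notin> ?L"
    have d: "derivable ((\<Delta>(x \<mapsto> A1)) \<circ> sw x z) (tsw x z t) A2"
      by (rule derivable_tsw[OF impI(5)])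
    have e: "(\<Delta>(x \<mapsto> A1)) \<circ> sw x z = \<Delta>(z \<mapsto> A1)"
      using z impI(3) by (auto simp: sw_def fun_eq_iff)
    have "tsw x z t = topen 0 (FV z) b"
      using z xb by (simp add: tb tsw_topen tsw_id)
    then show "derivable (\<Delta>(z \<mapsto> A1)) (topen 0 (FV z) b) A2" using d e by simp
  qed
  have "A = Imp A1 A2" "wf_form A1" using impI(2,4) by auto
  then show ?thesis using fin H by (intro exI[of _ A1] exI[of _ A2] exI[of _ ?L]) simp
qed

lemma inv_TLam:
  assumes "derivable \<Delta> (TLam b) A"
  shows "\<exists>F L. A = All F \<and> finite L \<and>
     (\<forall>X. X \<notin> L \<longrightarrow> derivable \<Delta> (ttopen 0 X b) (fopen 0 X F))"
  using assms
proof (cases rule: derivable.cases)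
  case (allI t A' Y)
  let ?F = "fclose 0 Y A'"
  let ?L = "PFV \<Delta> \<union> tatoms b \<union> ffv ?F \<union> {Y}"
  have w: "wf_ctx \<Delta>" "wf_trm t" "wf_form A'" using derivable_wf[OF allI(3)] by auto
  have fin: "finite ?L" using PFV_finite[OF w(1)] by auto
  have tb: "t = ttopen 0 Y b" using allI(1) ttopen_ttclose[of 0 0 t Y] w(2) by (simp add: wf_trm_def)
  have Ab: "A' = fopen 0 Y ?F" using fopen_fclose[of 0 A' Y] w(3) by (simp add: wf_form_def)
  have Yb: "Y \<notin> tatoms b" "Y \<notin> ffv ?F" using allI(1) by auto
  have H: "\<forall>X. X \<notin> ?L \<longrightarrow> derivable \<Delta> (ttopen 0 X b) (fopen 0 X ?F)"
  proof (intro HOL.allI HOL.impI)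
    fix X assume X: "X \<notin> ?L"
    have d: "derivable (csw Y X \<Delta>) (ttsw Y X t) (fsw Y X A')"
      by (rule derivable_ttsw[OF allI(3)])
    have "csw Y X \<Delta> = \<Delta>"
    proof (rule ext)
      fix z show "csw Y X \<Delta> z = \<Delta> z"
      proof (cases "\<Delta> z")
        case (Some C)
        then have "C \<in> ran \<Delta>" by (auto simp: ran_def)
        then have "Y \<notin> ffv C" "X \<notin> ffv C" using allI(4) X by (auto simp: PFV_def)
        then show ?thesis using Some by (simp add: csw_def fsw_id)
      qed (simp add: csw_def)
    qed
    moreover have "ttsw Y X t = ttopen 0 X b"
      using X Yb by (simp add: tb ttsw_ttopen ttsw_id)
    moreover have "fsw Y X A' = fopen 0 X ?F"
    proof -
      have "X \<notin> ffv ?F" "Y \<notin> ffv ?F" using X by auto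
      then have "fsw Y X ?F = ?F" by (rule fsw_id[rotated])
      then show ?thesis by (subst Ab) (simp add: fsw_fopen)
    qed
    ultimately show "derivable \<Delta> (ttopen 0 X b) (fopen 0 X ?F)" using d by simp
  qed
  have "A = All ?F" using allI(2) by auto
  then show ?thesis using fin H by (intro exI[of _ ?F] exI[of _ ?L]) simp
qed

lemma spine_ffv: "derivable \<Delta> n F \<Longrightarrow> spine n \<Longrightarrow> ffv F \<subseteq> tatoms n \<union> PFV \<Delta>"
proof (induction rule: derivable.induct)
  case (ax \<Gamma> x A)
  then show ?case by (auto simp: PFV_def ran_def)
next
  case (allE \<Gamma> t A Y)
  then show ?case using ffv_fopen[of 0 Y A] by auto
qed auto

section \<open>Markers and the simulation relation\<close>

definition D :: "nat \<Rightarrow> form" where "D x = All (At (FA x))"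
definition hm :: "nat \<Rightarrow> form \<Rightarrow> trm" where
  "hm x A = App (Con (Imp (D x) A)) (Con (D x))"

lemma hm_lct: "lcf 0 A \<Longrightarrow> lct k j (hm x A)"
  by (auto simp: hm_def D_def intro: lcf_mono)
lemma hm_tFV[simp]: "tFV (hm x A) = {}" by (simp add: hm_def)
lemma hm_tatoms[simp]: "tatoms (hm x A) = ffv A \<union> {x}" by (auto simp: hm_def D_def)
lemma hm_spine[simp]: "spine (hm x A)" by (simp add: hm_def)
lemma hm_normal[simp]: "normal (hm x A)" by (simp add: hm_def)

lemma tclose_id: "y \<notin> tFV t \<Longrightarrow> tclose k y t = t"
  by (induction t arbitrary: k) auto
lemma aclose_id: "X \<notin> afv a \<Longrightarrow> aclose j X a = a"
  by (cases a) auto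
lemma fclose_id: "X \<notin> ffv A \<Longrightarrow> fclose j X A = A"
  by (induction A arbitrary: j) (auto simp: aclose_id)
lemma ttclose_id: "X \<notin> tatoms t \<Longrightarrow> ttclose j X t = t"
  by (induction t arbitrary: j) (auto simp: fclose_id aclose_id)

inductive Sim :: "ctx \<Rightarrow> trm \<Rightarrow> trm \<Rightarrow> bool" and SimN :: "ctx \<Rightarrow> trm \<Rightarrow> trm \<Rightarrow> bool"
  for \<Gamma> :: ctx where
  sFV: "y \<notin> dom \<Gamma> \<Longrightarrow> Sim \<Gamma> (FV y) (FV y)"
| sBV: "Sim \<Gamma> (BV i) (BV i)"
| sCon: "Sim \<Gamma> (Con F) (Con F)"
| sLam: "Sim \<Gamma> P P' \<Longrightarrow> Sim \<Gamma> (Lam P) (Lam P')"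
| sApp: "Sim \<Gamma> P P' \<Longrightarrow> Sim \<Gamma> Q Q' \<Longrightarrow> Sim \<Gamma> (App P Q) (App P' Q')"
| sTLam: "Sim \<Gamma> P P' \<Longrightarrow> Sim \<Gamma> (TLam P) (TLam P')"
| sTApp: "Sim \<Gamma> P P' \<Longrightarrow> Sim \<Gamma> (TApp P a) (TApp P' a)"
| sE: "SimN \<Gamma> M n \<Longrightarrow> Sim \<Gamma> M (E C n)"
| nV: "\<Gamma> x = Some A \<Longrightarrow> SimN \<Gamma> (FV x) (hm x A)"
| nApp: "SimN \<Gamma> M n \<Longrightarrow> Sim \<Gamma> N w \<Longrightarrow> SimN \<Gamma> (App M N) (App n w)"
| nTApp: "SimN \<Gamma> M n \<Longrightarrow> SimN \<Gamma> (TApp M a) (TApp n a)"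

lemma SimN_spine': "Sim \<Gamma> M v \<Longrightarrow> True" "SimN \<Gamma> M n \<Longrightarrow> spine n"
  by (induction rule: Sim_SimN.inducts) auto

lemma SimN_spine: "SimN \<Gamma> M n \<Longrightarrow> spine n"
  by (rule SimN_spine'(2))

lemma SimN_notLam: "SimN \<Gamma> M n \<Longrightarrow> (\<forall>b. M \<noteq> Lam b) \<and> (\<forall>b. M \<noteq> TLam b)"
  by (erule SimN.cases) auto

lemma wf_ctx_lcf: "wf_ctx \<Gamma> \<Longrightarrow> \<Gamma> x = Some A \<Longrightarrow> lcf 0 A"
  by (auto simp: wf_ctx_def wf_form_def intro: ranI)

lemma Sim_topen:
  assumes w: "wf_ctx \<Gamma>" and N: "Sim \<Gamma> N N'" and lN: "lct 0 0 N'"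
  shows "Sim \<Gamma> P P' \<Longrightarrow> Sim \<Gamma> (topen k N P) (topen k N' P')"
    and "SimN \<Gamma> M n \<Longrightarrow> SimN \<Gamma> (topen k N M) (topen k N' n)"
proof (induction arbitrary: k and k rule: Sim_SimN.inducts)
  case (sBV i)
  then show ?case using N by (auto intro: Sim_SimN.intros)
next
  case (sE M n C)
  then show ?case using E_topen[OF lN] by (auto intro: Sim_SimN.intros)
next
  case (nV x A)
  have "topen k N' (hm x A) = hm x A"
    using hm_lct[OF wf_ctx_lcf[OF w nV]] topen_lct_id by blast
  then show ?case using nV by (auto intro: Sim_SimN.intros)
qed (auto intro: Sim_SimN.intros)

lemma Sim_ttopen:
  assumes w: "wf_ctx \<Gamma>"
  shows "Sim \<Gamma> P P' \<Longrightarrow> Sim \<Gamma> (ttopen j Y P) (ttopen j Y P')"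
    and "SimN \<Gamma> M n \<Longrightarrow> SimN \<Gamma> (ttopen j Y M) (ttopen j Y n)"
proof (induction arbitrary: j and j rule: Sim_SimN.inducts)
  case (sE M n C)
  then show ?case by (auto simp: E_ttopen intro: Sim_SimN.intros)
next
  case (nV x A)
  have "ttopen j Y (hm x A) = hm x A"
    using hm_lct[OF wf_ctx_lcf[OF w nV]] ttopen_lct_id by blast
  then show ?case using nV by (auto intro: Sim_SimN.intros)
qed (auto intro: Sim_SimN.intros)

lemma Sim_tclose:
  assumes y: "y \<notin> dom \<Gamma>"
  shows "Sim \<Gamma> P P' \<Longrightarrow> Sim \<Gamma> (tclose k y P) (tclose k y P')"
    and "SimN \<Gamma> M n \<Longrightarrow> SimN \<Gamma> (tclose k y M) (tclose k y n)"
proof (induction arbitrary: k and k rule: Sim_SimN.inducts)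
  case (sE M n C)
  then show ?case by (auto simp: E_tclose intro: Sim_SimN.intros)
next
  case (nV x A)
  have "tclose k y (hm x A) = hm x A" by (simp add: tclose_id)
  moreover have "x \<noteq> y" using nV y by auto
  ultimately show ?case using nV by (auto intro: Sim_SimN.intros)
qed (auto intro: Sim_SimN.intros)

lemma Sim_ttclose:
  assumes X: "X \<notin> PFV \<Gamma>" "X \<notin> dom \<Gamma>"
  shows "Sim \<Gamma> P P' \<Longrightarrow> Sim \<Gamma> (ttclose j X P) (ttclose j X P')"
    and "SimN \<Gamma> M n \<Longrightarrow> SimN \<Gamma> (ttclose j X M) (ttclose j X n)"
proof (induction arbitrary: j and j rule: Sim_SimN.inducts)
  case (sE M n C)
  then show ?case by (auto simp: E_ttclose intro: Sim_SimN.intros)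
next
  case (nV x A)
  have "A \<in> ran \<Gamma>" using nV by (auto intro: ranI)
  then have "X \<notin> ffv A" "X \<noteq> x" using X nV by (auto simp: PFV_def)
  then have "ttclose j X (hm x A) = hm x A" by (simp add: ttclose_id)
  then show ?case using nV by (auto intro: Sim_SimN.intros)
qed (auto intro: Sim_SimN.intros)

lemma Sim_refl: "tFV M \<inter> dom \<Gamma> = {} \<Longrightarrow> Sim \<Gamma> M M"
  by (induction M) (auto intro: Sim_SimN.intros)

lemma Sim_marker: "\<Gamma> x = Some A \<Longrightarrow> Sim \<Gamma> (FV x) (E A (hm x A))"
  by (auto intro: Sim_SimN.intros)

lemma Sim_Lam_inv: "Sim \<Gamma> (Lam P) v \<Longrightarrow> \<exists>b. v = Lam b \<and> Sim \<Gamma> P b"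
  by (erule Sim.cases) (auto dest: SimN_notLam)

lemma Sim_TLam_inv: "Sim \<Gamma> (TLam P) v \<Longrightarrow> \<exists>b. v = TLam b \<and> Sim \<Gamma> P b"
  by (erule Sim.cases) (auto dest: SimN_notLam)

lemma Sim_normal:
  shows "Sim \<Gamma> M v \<Longrightarrow> normal v \<Longrightarrow> normal M"
    and "SimN \<Gamma> M n \<Longrightarrow> normal n \<Longrightarrow> normal M"
proof (induction rule: Sim_SimN.inducts)
  case (sApp P P' Q Q')
  have h: "Sim \<Gamma> P P'" "normal (App P' Q')" using sApp by simp_all
  have "\<forall>b. P \<noteq> Lam b" using h Sim_Lam_inv[of \<Gamma> _ P'] by fastforce
  then show ?case using sApp by simp
next
  case (sTApp P P' a)
  have h: "Sim \<Gamma> P P'" "normal (TApp P' a)" using sTApp by simp_all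
  have "\<forall>b. P \<noteq> TLam b" using h Sim_TLam_inv[of \<Gamma> _ P'] by fastforce
  then show ?case using sTApp by simp
next
  case (sE M n C)
  then show ?case using E_normal by blast
next
  case (nApp M n N w)
  have "SimN \<Gamma> M n" using nApp by simp
  then show ?case using SimN_notLam nApp by simp
next
  case (nTApp M n a)
  have "SimN \<Gamma> M n" using nTApp by simp
  then show ?case using SimN_notLam nTApp by simp
qed auto

definition msub :: "ctx \<Rightarrow> nat \<Rightarrow> trm" where
  "msub \<Gamma> x = (case \<Gamma> x of None \<Rightarrow> FV x | Some A \<Rightarrow> E A (hm x A))"

lemma Sim_psubst: "Sim \<Gamma> t (psubst (msub \<Gamma>) t)"
proof (induction t)
  case (FV x)
  then show ?case by (cases "\<Gamma> x") (auto simp: msub_def intro: Sim_SimN.intros)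
qed (auto intro: Sim_SimN.intros)

section \<open>Inverting beta on eta-expansions\<close>

lemma lct_sh_rev: "c \<le> k \<Longrightarrow> lct (Suc k) j (sh c m) \<Longrightarrow> lct k j m"
proof (induction m arbitrary: c k j)
  case (Lam m)
  then show ?case using Lam.IH[of "Suc c" "Suc k" j] by simp
qed (auto split: if_splits)

lemma lca_ash_rev: "c \<le> j \<Longrightarrow> lca (Suc j) (ash c a) \<Longrightarrow> lca j a"
  by (cases a) (auto split: if_splits)
lemma lcf_fsh_rev: "c \<le> j \<Longrightarrow> lcf (Suc j) (fsh c A) \<Longrightarrow> lcf j A"
proof (induction A arbitrary: c j)
  case (All A)
  then show ?case using All.IH[of "Suc c" "Suc j"] by simp
qed (auto intro: lca_ash_rev)
lemma lct_tsh_rev: "c \<le> j \<Longrightarrow> lct k (Suc j) (tsh c m) \<Longrightarrow> lct k j m"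
proof (induction m arbitrary: c k j)
  case (TLam m)
  then show ?case using TLam.IH[of "Suc c" "Suc j" k] by simp
qed (auto intro: lca_ash_rev lcf_fsh_rev)

lemma lct_E_rev: "lct k j (E C m) \<Longrightarrow> lct k j m"
proof (induction C arbitrary: k j m)
  case (Imp B C)
  have "lct (Suc k) j (E C (App (sh 0 m) (BV 0)))" using Imp.prems by simp
  then have "lct (Suc k) j (App (sh 0 m) (BV 0))" by (rule Imp.IH(2))
  then show ?case using lct_sh_rev[of 0 k j m] by simp
next
  case (All A)
  have "lct k (Suc j) (E A (TApp (tsh 0 m) (BA 0)))" using All.prems by simp
  then have "lct k (Suc j) (TApp (tsh 0 m) (BA 0))" by (rule All.IH)
  then show ?case using lct_tsh_rev[of 0 j k m] by simp
qed simp

lemma beta_hm[simp]: "\<not> beta (hm x A) w"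
  unfolding hm_def using beta_App_cases by fastforce

lemma E_beta_inv: "spine n \<Longrightarrow> lct 0 0 n \<Longrightarrow> beta (E C n) w' \<Longrightarrow> \<exists>n'. w' = E C n' \<and> beta n n'"
proof (induction C arbitrary: n w')
  case (At a)
  then show ?case by simp
next
  case (Imp B C)
  let ?b = "E C (App (sh 0 n) (BV 0))"
  have "beta (Lam ?b) w'" using Imp.prems by simp
  then obtain x t t' where xt: "?b = tclose 0 x t" "w' = Lam (tclose 0 x t')" "beta t t'"
    using beta_Lam_cases by blast
  have lt: "lct 0 0 t" "lct 0 0 t'" using beta_wf[OF xt(3)] by (auto simp: wf_trm_def)
  have "t = topen 0 (FV x) ?b" using xt(1) topen_tclose[OF lt(1)] by simp
  also have "\<dots> = E C (App n (FV x))" using E_Imp_open[where s="FV x" and m=n and C=C] Imp.prems(2) by simp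
  finally have "beta (E C (App n (FV x))) t'" using xt(3) by simp
  moreover have "spine (App n (FV x))" "lct 0 0 (App n (FV x))" using Imp.prems by auto
  ultimately obtain n'' where n'': "t' = E C n''" "beta (App n (FV x)) n''"
    using Imp.IH(2) by blast
  have "\<forall>b. n \<noteq> Lam b" using Imp.prems(1) by auto
  then obtain n1 where n1: "n'' = App n1 (FV x)" "beta n n1"
    using beta_App_cases[OF n''(2)] by auto
  have "x \<notin> tFV ?b" using xt(1) by simp
  then have "x \<notin> tFV n" by simp
  then have "x \<notin> tFV n1" using beta_tFV[OF n1(2)] by auto
  then have c1: "tclose 0 x n1 = n1" by (rule tclose_id)
  have "lct 0 0 n1" using beta_wf[OF n1(2)] by (simp add: wf_trm_def)
  then have c2: "sh 0 n1 = n1" by (rule sh_id0)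
  have "w' = Lam (E C (App (tclose 0 x n1) (BV 0)))"
    using xt(2) n''(1) n1(1) by (simp add: E_tclose)
  also have "\<dots> = E (Imp B C) n1" using c1 c2 by simp
  finally show ?case using n1(2) by blast
next
  case (All A)
  let ?b = "E A (TApp (tsh 0 n) (BA 0))"
  have "beta (TLam ?b) w'" using All.prems by simp
  then obtain X t t' where xt: "?b = ttclose 0 X t" "w' = TLam (ttclose 0 X t')" "beta t t'"
    using beta_TLam_cases by blast
  have lt: "lct 0 0 t" "lct 0 0 t'" using beta_wf[OF xt(3)] by (auto simp: wf_trm_def)
  have "t = ttopen 0 X ?b" using xt(1) ttopen_ttclose[OF lt(1)] by simp
  also have "\<dots> = E A (TApp n (FA X))" using E_All_open[where m=n and C=A and Y=X] All.prems(2) by simp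
  finally have "beta (E A (TApp n (FA X))) t'" using xt(3) by simp
  moreover have "spine (TApp n (FA X))" "lct 0 0 (TApp n (FA X))" using All.prems by auto
  ultimately obtain n'' where n'': "t' = E A n''" "beta (TApp n (FA X)) n''"
    using All.IH by blast
  have "\<forall>b. n \<noteq> TLam b" using All.prems(1) by auto
  then obtain n1 where n1: "n'' = TApp n1 (FA X)" "beta n n1"
    using beta_TApp_cases[OF n''(2)] by auto
  have "X \<notin> tatoms ?b" using xt(1) by simp
  then have "X \<notin> tatoms n" by simp
  then have "X \<notin> tatoms n1" using beta_tatoms[OF n1(2)] by auto
  then have c1: "ttclose 0 X n1 = n1" by (rule ttclose_id)
  have "lct 0 0 n1" using beta_wf[OF n1(2)] by (simp add: wf_trm_def)
  then have c2: "tsh 0 n1 = n1" by (rule tsh_id0)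
  have "w' = TLam (E A (TApp (ttclose 0 X n1) (BA 0)))"
    using xt(2) n''(1) n1(1) by (simp add: E_ttclose)
  also have "\<dots> = E (All A) n1" using c1 c2 by simp
  finally show ?case using n1(2) by blast
qed

section \<open>Simulation\<close>

definition SIM :: "ctx \<Rightarrow> trm \<Rightarrow> trm \<Rightarrow> bool" where
  "SIM \<Gamma> w w' = (\<forall>M. Sim \<Gamma> M w \<longrightarrow> wf_trm M \<longrightarrow> (\<exists>M'. (beta M M' \<or> M' = M) \<and> Sim \<Gamma> M' w'))"

definition SIMN :: "ctx \<Rightarrow> trm \<Rightarrow> trm \<Rightarrow> bool" where
  "SIMN \<Gamma> w w' = (\<forall>M. SimN \<Gamma> M w \<longrightarrow> wf_trm M \<longrightarrow> (\<exists>M'. (beta M M' \<or> M' = M) \<and> SimN \<Gamma> M' w'))"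

definition IHp :: "ctx \<Rightarrow> trm \<Rightarrow> bool" where
  "IHp \<Gamma> w = (\<forall>v v'. tsz v < tsz w \<longrightarrow> beta v v' \<longrightarrow> SIM \<Gamma> v v' \<and> SIMN \<Gamma> v v')"

lemma wf_TApp_FA: "wf_trm (TApp M a) \<Longrightarrow> \<exists>Y. a = FA Y"
  by (cases a) (auto simp: wf_trm_def)

lemma simN_step:
  assumes IH: "IHp \<Gamma> w" and bw: "beta w w'"
  shows "SIMN \<Gamma> w w'"
  unfolding SIMN_def
proof (intro HOL.allI HOL.impI)
  fix M assume sn: "SimN \<Gamma> M w" and wM: "wf_trm M"
  from sn show "\<exists>M'. (beta M M' \<or> M' = M) \<and> SimN \<Gamma> M' w'"
  proof (cases rule: SimN.cases)
    case (nV x A)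
    then show ?thesis using bw by simp
  next
    case (nApp M0 n N w2)
    have sp: "spine n" using SimN_spine[OF nApp(3)] .
    have wf0: "wf_trm M0" "wf_trm N" using wM nApp(1) by (auto simp: wf_trm_def)
    from beta_App_cases[of n w2 w'] bw nApp(2)
    consider (r) b where "n = Lam b" | (l) n1 where "beta n n1" "w' = App n1 w2"
      | (rr) w3 where "beta w2 w3" "w' = App n w3" by auto
    then show ?thesis
    proof cases
      case r then show ?thesis using sp by simp
    next
      case l
      have "tsz n < tsz w" using nApp(2) by simp
      then have "SIMN \<Gamma> n n1" using IH l(1) by (auto simp: IHp_def)
      then obtain M0' where M0': "beta M0 M0' \<or> M0' = M0" "SimN \<Gamma> M0' n1"
        using nApp(3) wf0(1) unfolding SIMN_def by blast
      have "beta M (App M0' N) \<or> App M0' N = M"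
        using M0'(1) nApp(1) wf0(2) by (auto intro: beta.cong_appL)
      moreover have "SimN \<Gamma> (App M0' N) w'" using l(2) M0'(2) nApp(4) by (auto intro: Sim_SimN.intros)
      ultimately show ?thesis by blast
    next
      case rr
      have "tsz w2 < tsz w" using nApp(2) by simp
      then have "SIM \<Gamma> w2 w3" using IH rr(1) by (auto simp: IHp_def)
      then obtain N' where N': "beta N N' \<or> N' = N" "Sim \<Gamma> N' w3"
        using nApp(4) wf0(2) unfolding SIM_def by blast
      have "beta M (App M0 N') \<or> App M0 N' = M"
        using N'(1) nApp(1) wf0(1) by (auto intro: beta.cong_appR)
      moreover have "SimN \<Gamma> (App M0 N') w'" using rr(2) N'(2) nApp(3) by (auto intro: Sim_SimN.intros)
      ultimately show ?thesis by blast
    qed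
  next
    case (nTApp M0 n a)
    have sp: "spine n" using SimN_spine[OF nTApp(3)] .
    have wf0: "wf_trm M0" using wM nTApp(1) by (auto simp: wf_trm_def)
    obtain Y where aY: "a = FA Y" using wf_TApp_FA wM nTApp(1) by blast
    from beta_TApp_cases[of n a w'] bw nTApp(2) sp
    obtain n1 where l: "beta n n1" "w' = TApp n1 a" by auto
    have "tsz n < tsz w" using nTApp(2) by simp
    then have "SIMN \<Gamma> n n1" using IH l(1) by (auto simp: IHp_def)
    then obtain M0' where M0': "beta M0 M0' \<or> M0' = M0" "SimN \<Gamma> M0' n1"
      using nTApp(3) wf0 unfolding SIMN_def by blast
    have "beta M (TApp M0' a) \<or> TApp M0' a = M"
      using M0'(1) nTApp(1) aY by (auto intro: beta.cong_tapp)
    moreover have "SimN \<Gamma> (TApp M0' a) w'" using l(2) M0'(2) by (auto intro: Sim_SimN.intros)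
    ultimately show ?thesis by blast
  qed
qed

lemma wf_ctx_fin: "wf_ctx \<Gamma> \<Longrightarrow> finite (dom \<Gamma>)" by (simp add: wf_ctx_def)

lemma sim_Lam:
  assumes w: "wf_ctx \<Gamma>" and IH: "IHp \<Gamma> (Lam P')" and bw: "beta (Lam P') w'"
    and S: "Sim \<Gamma> P P'" and wM: "wf_trm (Lam P)"
  shows "\<exists>M'. (beta (Lam P) M' \<or> M' = Lam P) \<and> Sim \<Gamma> M' w'"
proof -
  obtain x t t' where xt: "P' = tclose 0 x t" "w' = Lam (tclose 0 x t')" "beta t t'"
    using beta_Lam_cases[OF bw] by (elim exE conjE) (rule that)
  define b' where "b' = tclose 0 x t'"
  define F where "F = dom \<Gamma> \<union> tFV P \<union> tFV P' \<union> tFV b' \<union> {x}"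
  have "finite F" using wf_ctx_fin[OF w] by (simp add: F_def)
  then obtain y where "y \<notin> F" using fresh_nat by blast
  then have y: "y \<notin> dom \<Gamma>" "y \<notin> tFV P" "y \<notin> tFV P'" "y \<notin> tFV b'" "y \<noteq> x" by (auto simp: F_def)
  have lt: "lct 0 0 t" "lct 0 0 t'" using beta_wf[OF xt(3)] by (auto simp: wf_trm_def)
  have tP: "t = topen 0 (FV x) P'" using xt(1) topen_tclose[OF lt(1)] by simp
  have tb: "t' = topen 0 (FV x) b'" using b'_def topen_tclose[OF lt(2)] by simp
  have xP: "x \<notin> tFV P'" "x \<notin> tFV b'" using xt(1) b'_def by auto
  have "beta (tsw x y t) (tsw x y t')" by (rule beta_tsw[OF xt(3)])
  moreover have "tsw x y t = topen 0 (FV y) P'" using y xP by (simp add: tP tsw_topen tsw_id)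
  moreover have "tsw x y t' = topen 0 (FV y) b'" using y xP by (simp add: tb tsw_topen tsw_id)
  ultimately have bt: "beta (topen 0 (FV y) P') (topen 0 (FV y) b')" by simp
  have "tsz (topen 0 (FV y) P') < tsz (Lam P')" by simp
  then have SI: "SIM \<Gamma> (topen 0 (FV y) P') (topen 0 (FV y) b')" using IH bt by (auto simp: IHp_def)
  have yS: "Sim \<Gamma> (FV y) (FV y)" using y by (auto intro: Sim_SimN.intros)
  have S1: "Sim \<Gamma> (topen 0 (FV y) P) (topen 0 (FV y) P')"
    by (rule Sim_topen(1)[OF w yS _ S]) simp
  have wP: "wf_trm (topen 0 (FV y) P)" using wM lct_topen[of 0 0 P "FV y"] by (simp add: wf_trm_def)
  obtain M3 where M3: "beta (topen 0 (FV y) P) M3 \<or> M3 = topen 0 (FV y) P" "Sim \<Gamma> M3 (topen 0 (FV y) b')"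
    using SI S1 wP unfolding SIM_def by blast
  have "Sim \<Gamma> (tclose 0 y M3) (tclose 0 y (topen 0 (FV y) b'))"
    using Sim_tclose(1)[of y \<Gamma> M3 "topen 0 (FV y) b'" 0] y M3(2) by simp
  moreover have "tclose 0 y (topen 0 (FV y) b') = b'" using y by (simp add: tclose_topen)
  ultimately have "Sim \<Gamma> (Lam (tclose 0 y M3)) w'" using xt(2) b'_def by (auto intro: Sim_SimN.intros)
  moreover have PP: "Lam P = Lam (tclose 0 y (topen 0 (FV y) P))" using y by (simp add: tclose_topen)
  have "beta (Lam P) (Lam (tclose 0 y M3)) \<or> Lam (tclose 0 y M3) = Lam P"
    using M3(1) PP by (metis beta.cong_lam)
  ultimately show ?thesis by blast
qed

lemma sim_TLam:
  assumes w: "wf_ctx \<Gamma>" and IH: "IHp \<Gamma> (TLam P')" and bw: "beta (TLam P') w'"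
    and S: "Sim \<Gamma> P P'" and wM: "wf_trm (TLam P)"
  shows "\<exists>M'. (beta (TLam P) M' \<or> M' = TLam P) \<and> Sim \<Gamma> M' w'"
proof -
  obtain X t t' where xt: "P' = ttclose 0 X t" "w' = TLam (ttclose 0 X t')" "beta t t'"
    using beta_TLam_cases[OF bw] by (elim exE conjE) (rule that)
  define b' where "b' = ttclose 0 X t'"
  define F where "F = PFV \<Gamma> \<union> dom \<Gamma> \<union> tatoms P \<union> tatoms P' \<union> tatoms b' \<union> {X}"
  have "finite F" using wf_ctx_fin[OF w] PFV_finite[OF w] by (simp add: F_def)
  then obtain Y where "Y \<notin> F" using fresh_nat by blast
  then have Y: "Y \<notin> PFV \<Gamma>" "Y \<notin> dom \<Gamma>" "Y \<notin> tatoms P" "Y \<notin> tatoms P'" "Y \<notin> tatoms b'" "Y \<noteq> X"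
    by (auto simp: F_def)
  have lt: "lct 0 0 t" "lct 0 0 t'" using beta_wf[OF xt(3)] by (auto simp: wf_trm_def)
  have tP: "t = ttopen 0 X P'" using xt(1) ttopen_ttclose[OF lt(1)] by simp
  have tb: "t' = ttopen 0 X b'" using b'_def ttopen_ttclose[OF lt(2)] by simp
  have xP: "X \<notin> tatoms P'" "X \<notin> tatoms b'" using xt(1) b'_def by auto
  have "beta (ttsw X Y t) (ttsw X Y t')" by (rule beta_ttsw[OF xt(3)])
  moreover have "ttsw X Y t = ttopen 0 Y P'" using Y xP by (simp add: tP ttsw_ttopen ttsw_id)
  moreover have "ttsw X Y t' = ttopen 0 Y b'" using Y xP by (simp add: tb ttsw_ttopen ttsw_id)
  ultimately have bt: "beta (ttopen 0 Y P') (ttopen 0 Y b')" by simp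
  have "tsz (ttopen 0 Y P') < tsz (TLam P')" by simp
  then have SI: "SIM \<Gamma> (ttopen 0 Y P') (ttopen 0 Y b')" using IH bt by (auto simp: IHp_def)
  have S1: "Sim \<Gamma> (ttopen 0 Y P) (ttopen 0 Y P')" by (rule Sim_ttopen(1)[OF w S])
  have wP: "wf_trm (ttopen 0 Y P)" using wM lct_ttopen[of 0 0 P Y] by (simp add: wf_trm_def)
  obtain M3 where M3: "beta (ttopen 0 Y P) M3 \<or> M3 = ttopen 0 Y P" "Sim \<Gamma> M3 (ttopen 0 Y b')"
    using SI S1 wP unfolding SIM_def by blast
  have YG: "Y \<notin> PFV \<Gamma>" "Y \<notin> dom \<Gamma>" using Y by simp_all
  have "Sim \<Gamma> (ttclose 0 Y M3) (ttclose 0 Y (ttopen 0 Y b'))"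
    by (rule Sim_ttclose(1)[OF YG M3(2)])
  moreover have "ttclose 0 Y (ttopen 0 Y b') = b'" using Y by (simp add: ttclose_ttopen)
  ultimately have "Sim \<Gamma> (TLam (ttclose 0 Y M3)) w'" using xt(2) b'_def by (auto intro: Sim_SimN.intros)
  moreover have PP: "TLam P = TLam (ttclose 0 Y (ttopen 0 Y P))" using Y by (simp add: ttclose_ttopen)
  have "beta (TLam P) (TLam (ttclose 0 Y M3)) \<or> TLam (ttclose 0 Y M3) = TLam P"
    using M3(1) PP by (metis beta.cong_tlam)
  ultimately show ?thesis by blast
qed

lemma E_Lam_cases: "E C n = Lam b \<Longrightarrow> spine n \<Longrightarrow> \<exists>B C'. C = Imp B C' \<and> b = E C' (App (sh 0 n) (BV 0))"
  by (cases C) auto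

lemma E_TLam_cases: "E C n = TLam b \<Longrightarrow> spine n \<Longrightarrow> \<exists>A. C = All A \<and> b = E A (TApp (tsh 0 n) (BA 0))"
  by (cases C) auto

lemma sim_App:
  assumes w: "wf_ctx \<Gamma>" and IH: "IHp \<Gamma> (App P' Q')" and bw: "beta (App P' Q') w'"
    and SP: "Sim \<Gamma> P P'" and SQ: "Sim \<Gamma> Q Q'" and wM: "wf_trm (App P Q)"
  shows "\<exists>M'. (beta (App P Q) M' \<or> M' = App P Q) \<and> Sim \<Gamma> M' w'"
proof -
  have ww: "wf_trm (App P' Q')" using beta_wf[OF bw] by simp
  have wPQ: "wf_trm P" "wf_trm Q" "wf_trm P'" "wf_trm Q'" using wM ww by (auto simp: wf_trm_def)
  from beta_App_cases[OF bw]
  consider (r) b where "P' = Lam b" "w' = topen 0 Q' b" | (l) P'' where "beta P' P''" "w' = App P'' Q'"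
      | (rr) Q'' where "beta Q' Q''" "w' = App P' Q''" by blast
  then show ?thesis
  proof cases
    case r
    from SP[unfolded r(1)] show ?thesis
    proof (cases rule: Sim.cases)
      case (sLam P0)
      have "beta (App P Q) (topen 0 Q P0)"
        using beta.beta_lam[of P0 Q] wM sLam(1) by simp
      moreover have "Sim \<Gamma> (topen 0 Q P0) (topen 0 Q' b)"
        using Sim_topen(1)[OF w SQ _ sLam(2)] wPQ(4) by (simp add: wf_trm_def)
      ultimately show ?thesis using r(2) by blast
    next
      case (sE n C)
      have sp: "spine n" using SimN_spine[OF sE(2)] .
      obtain B C' where BC: "C = Imp B C'" "b = E C' (App (sh 0 n) (BV 0))"
        using E_Lam_cases[OF sE(1)[symmetric] sp] by blast
      have ln: "lct 0 0 n" using wPQ(3) r(1) sE(1) lct_E_rev[of 0 0 C n] by (simp add: wf_trm_def)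
      have "w' = E C' (App n Q')"
        using r(2) BC(2) E_Imp_open[where s=Q' and m=n and C=C'] ln wPQ(4) by (simp add: wf_trm_def)
      moreover have "SimN \<Gamma> (App P Q) (App n Q')" using sE(2) SQ by (rule Sim_SimN.nApp)
      ultimately have "Sim \<Gamma> (App P Q) w'" by (auto intro: Sim_SimN.sE)
      then show ?thesis by blast
    qed
  next
    case l
    have "tsz P' < tsz (App P' Q')" by simp
    then have "SIM \<Gamma> P' P''" using IH l(1) by (auto simp: IHp_def)
    then obtain P3 where P3: "beta P P3 \<or> P3 = P" "Sim \<Gamma> P3 P''" using SP wPQ(1) unfolding SIM_def by blast
    have "beta (App P Q) (App P3 Q) \<or> App P3 Q = App P Q" using P3(1) wPQ(2) by (auto intro: beta.cong_appL)
    moreover have "Sim \<Gamma> (App P3 Q) w'" using l(2) P3(2) SQ by (auto intro: Sim_SimN.intros)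
    ultimately show ?thesis by blast
  next
    case rr
    have "tsz Q' < tsz (App P' Q')" by simp
    then have "SIM \<Gamma> Q' Q''" using IH rr(1) by (auto simp: IHp_def)
    then obtain Q3 where Q3: "beta Q Q3 \<or> Q3 = Q" "Sim \<Gamma> Q3 Q''" using SQ wPQ(2) unfolding SIM_def by blast
    have "beta (App P Q) (App P Q3) \<or> App P Q3 = App P Q" using Q3(1) wPQ(1) by (auto intro: beta.cong_appR)
    moreover have "Sim \<Gamma> (App P Q3) w'" using rr(2) Q3(2) SP by (auto intro: Sim_SimN.intros)
    ultimately show ?thesis by blast
  qed
qed

lemma sim_TApp:
  assumes w: "wf_ctx \<Gamma>" and IH: "IHp \<Gamma> (TApp P' a)" and bw: "beta (TApp P' a) w'"
    and SP: "Sim \<Gamma> P P'" and wM: "wf_trm (TApp P a)"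
  shows "\<exists>M'. (beta (TApp P a) M' \<or> M' = TApp P a) \<and> Sim \<Gamma> M' w'"
proof -
  have ww: "wf_trm (TApp P' a)" using beta_wf[OF bw] by simp
  have wPQ: "wf_trm P" "wf_trm P'" using wM ww by (auto simp: wf_trm_def)
  obtain Y where aY: "a = FA Y" using wf_TApp_FA wM by blast
  from beta_TApp_cases[OF bw]
  consider (r) b where "P' = TLam b" "w' = ttopen 0 Y b" | (l) P'' where "beta P' P''" "w' = TApp P'' a"
    using aY by blast
  then show ?thesis
  proof cases
    case r
    from SP[unfolded r(1)] show ?thesis
    proof (cases rule: Sim.cases)
      case (sTLam P0)
      have "beta (TApp P a) (ttopen 0 Y P0)"
        using beta.beta_tlam[of P0 Y] wM sTLam(1) aY by simp
      moreover have "Sim \<Gamma> (ttopen 0 Y P0) (ttopen 0 Y b)"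
        using Sim_ttopen(1)[OF w sTLam(2)] by simp
      ultimately show ?thesis using r(2) by blast
    next
      case (sE n C)
      have sp: "spine n" using SimN_spine[OF sE(2)] .
      obtain A where BC: "C = All A" "b = E A (TApp (tsh 0 n) (BA 0))"
        using E_TLam_cases[OF sE(1)[symmetric] sp] by blast
      have ln: "lct 0 0 n" using wPQ(2) r(1) sE(1) lct_E_rev[of 0 0 C n] by (simp add: wf_trm_def)
      have "w' = E A (TApp n (FA Y))"
        using r(2) BC(2) E_All_open[where Y=Y and m=n and C=A] ln by simp
      moreover have "SimN \<Gamma> (TApp P a) (TApp n (FA Y))" using sE(2) aY by (auto intro: Sim_SimN.nTApp)
      ultimately have "Sim \<Gamma> (TApp P a) w'" by (auto intro: Sim_SimN.sE)
      then show ?thesis by blast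
    qed
  next
    case l
    have "tsz P' < tsz (TApp P' a)" by simp
    then have "SIM \<Gamma> P' P''" using IH l(1) by (auto simp: IHp_def)
    then obtain P3 where P3: "beta P P3 \<or> P3 = P" "Sim \<Gamma> P3 P''" using SP wPQ(1) unfolding SIM_def by blast
    have "beta (TApp P a) (TApp P3 a) \<or> TApp P3 a = TApp P a" using P3(1) aY by (auto intro: beta.cong_tapp)
    moreover have "Sim \<Gamma> (TApp P3 a) w'" using l(2) P3(2) by (auto intro: Sim_SimN.intros)
    ultimately show ?thesis by blast
  qed
qed

lemma sim_E:
  assumes IH: "IHp \<Gamma> (E C n)" and SN: "SIMN \<Gamma> (E C n) w'" and bw: "beta (E C n) w'"
    and S: "SimN \<Gamma> M n" and wM: "wf_trm M"
  shows "\<exists>M'. (beta M M' \<or> M' = M) \<and> Sim \<Gamma> M' w'"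
proof (cases C)
  case (At a)
  then obtain M' where "beta M M' \<or> M' = M" "SimN \<Gamma> M' w'" using SN S wM unfolding SIMN_def by auto
  moreover have "E (At a) w' = w'" by simp
  ultimately show ?thesis by (metis Sim_SimN.sE)
next
  case (Imp B C')
  have sp: "spine n" using SimN_spine[OF S] .
  have ln: "lct 0 0 n" using beta_wf[OF bw] lct_E_rev[of 0 0 C n] by (simp add: wf_trm_def)
  obtain n' where n': "w' = E C n'" "beta n n'" using E_beta_inv[OF sp ln bw] by blast
  have "tsz n < tsz (E C n)" using Imp E_size_Imp by simp
  then have "SIMN \<Gamma> n n'" using IH n'(2) by (auto simp: IHp_def)
  then obtain M' where "beta M M' \<or> M' = M" "SimN \<Gamma> M' n'" using S wM unfolding SIMN_def by blast
  then show ?thesis using n'(1) by (auto intro: Sim_SimN.sE)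
next
  case (All A)
  have sp: "spine n" using SimN_spine[OF S] .
  have ln: "lct 0 0 n" using beta_wf[OF bw] lct_E_rev[of 0 0 C n] by (simp add: wf_trm_def)
  obtain n' where n': "w' = E C n'" "beta n n'" using E_beta_inv[OF sp ln bw] by blast
  have "tsz n < tsz (E C n)" using All E_size_All by simp
  then have "SIMN \<Gamma> n n'" using IH n'(2) by (auto simp: IHp_def)
  then obtain M' where "beta M M' \<or> M' = M" "SimN \<Gamma> M' n'" using S wM unfolding SIMN_def by blast
  then show ?thesis using n'(1) by (auto intro: Sim_SimN.sE)
qed

lemma sim_step:
  assumes w: "wf_ctx \<Gamma>" and IH: "IHp \<Gamma> w" and bw: "beta w w'"
  shows "SIM \<Gamma> w w'"
  unfolding SIM_def
proof (intro HOL.allI HOL.impI)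
  fix M assume S: "Sim \<Gamma> M w" and wM: "wf_trm M"
  have SN: "SIMN \<Gamma> w w'" using simN_step[OF IH bw] .
  from S show "\<exists>M'. (beta M M' \<or> M' = M) \<and> Sim \<Gamma> M' w'"
  proof (cases rule: Sim.cases)
    case (sFV y) then show ?thesis using bw by simp
  next
    case (sBV i) then show ?thesis using bw by simp
  next
    case (sCon F) then show ?thesis using bw by simp
  next
    case (sLam P P')
    then show ?thesis using sim_Lam[OF w _ _ sLam(3)] IH bw wM by simp
  next
    case (sApp P P' Q Q')
    then show ?thesis using sim_App[OF w _ _ sApp(3) sApp(4)] IH bw wM by simp
  next
    case (sTLam P P')
    then show ?thesis using sim_TLam[OF w _ _ sTLam(3)] IH bw wM by simp
  next
    case (sTApp P P' a)
    then show ?thesis using sim_TApp[OF w _ _ sTApp(3)] IH bw wM by simp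
  next
    case (sE n C)
    then show ?thesis using sim_E[OF _ _ _ sE(2) wM] IH bw SN by simp
  qed
qed

lemma sim_one: "wf_ctx \<Gamma> \<Longrightarrow> beta w w' \<Longrightarrow> SIM \<Gamma> w w' \<and> SIMN \<Gamma> w w'"
proof (induction w arbitrary: w' rule: measure_induct_rule[of tsz])
  case (less w)
  have IH: "IHp \<Gamma> w" using less.IH less.prems(1) unfolding IHp_def by blast
  show ?case using sim_step[OF less.prems(1) IH less.prems(2)] simN_step[OF IH less.prems(2)] by blast
qed

lemma sim_multi:
  assumes w: "wf_ctx \<Gamma>"
  shows "betas w v \<Longrightarrow> Sim \<Gamma> M w \<Longrightarrow> wf_trm M \<Longrightarrow> \<exists>M'. betas M M' \<and> Sim \<Gamma> M' v"
proof (induction arbitrary: M rule: rtranclp_induct)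
  case base
  then show ?case by blast
next
  case (step y z)
  obtain M1 where M1: "betas M M1" "Sim \<Gamma> M1 y" using step.IH step.prems by blast
  have "wf_trm M1" using betas_wf[OF M1(1) step.prems(2)] .
  then obtain M2 where "beta M1 M2 \<or> M2 = M1" "Sim \<Gamma> M2 z"
    using sim_one[OF w step.hyps(2)] M1(2) unfolding SIM_def by blast
  then show ?case using M1(1) by (metis rtranclp.rtrancl_into_rtrancl)
qed

section \<open>Typing transfer\<close>

lemma E_typing: "spine n \<Longrightarrow> lct 0 0 n \<Longrightarrow> derivable \<Delta> (E C n) A \<Longrightarrow> derivable \<Delta> n A"
proof (induction C arbitrary: n A \<Delta>)
  case (At a)
  then show ?case by simp
next
  case (Imp B C)
  let ?b = "E C (App (sh 0 n) (BV 0))"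
  have "derivable \<Delta> (Lam ?b) A" using Imp.prems by simp
  then obtain A1 A2 L where AL: "A = Imp A1 A2" "wf_form A1" "finite L"
    "\<forall>z. z \<notin> L \<longrightarrow> derivable (\<Delta>(z \<mapsto> A1)) (topen 0 (FV z) ?b) A2"
    using inv_Lam by blast
  have wD: "wf_ctx \<Delta>" using derivable_wf Imp.prems(3) by blast
  define F where "F = L \<union> tFV n \<union> dom \<Delta>"
  have "finite F" using AL(3) wD by (simp add: F_def wf_ctx_def)
  then obtain z where "z \<notin> F" using fresh_nat by blast
  then have z: "z \<notin> L" "z \<notin> tFV n" "z \<notin> dom \<Delta>" by (auto simp: F_def)
  have "topen 0 (FV z) ?b = E C (App n (FV z))"
    using E_Imp_open[where s="FV z" and m=n and C=C] Imp.prems(2) by simp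
  moreover have "derivable (\<Delta>(z \<mapsto> A1)) (topen 0 (FV z) ?b) A2" using AL(4) z(1) by blast
  ultimately have "derivable (\<Delta>(z \<mapsto> A1)) (E C (App n (FV z))) A2" by simp
  then have "derivable (\<Delta>(z \<mapsto> A1)) (App n (FV z)) A2"
    using Imp.IH(2)[of "App n (FV z)"] Imp.prems by simp
  then obtain A' where A': "derivable (\<Delta>(z \<mapsto> A1)) n (Imp A' A2)" "derivable (\<Delta>(z \<mapsto> A1)) (FV z) A'"
    using inv_App by blast
  have "A' = A1" using inv_FV[OF A'(2)] by simp
  then have "derivable ((\<Delta>(z \<mapsto> A1))(z := None)) n (Imp A1 A2)"
    using derivable_strengthen[OF A'(1) z(2)] by simp
  moreover have "(\<Delta>(z \<mapsto> A1))(z := None) = \<Delta>" using z(3) by auto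
  ultimately show ?case using AL(1) by simp
next
  case (All A0)
  let ?b = "E A0 (TApp (tsh 0 n) (BA 0))"
  have "derivable \<Delta> (TLam ?b) A" using All.prems by simp
  then obtain F L where AL: "A = All F" "finite L"
    "\<forall>X. X \<notin> L \<longrightarrow> derivable \<Delta> (ttopen 0 X ?b) (fopen 0 X F)"
    using inv_TLam by blast
  have wD: "wf_ctx \<Delta>" using derivable_wf All.prems(3) by blast
  define G where "G = L \<union> tatoms n \<union> PFV \<Delta> \<union> ffv F"
  have "finite G" using AL(2) PFV_finite[OF wD] by (simp add: G_def)
  then obtain X where "X \<notin> G" using fresh_nat by blast
  then have X: "X \<notin> L" "X \<notin> tatoms n" "X \<notin> PFV \<Delta>" "X \<notin> ffv F" by (auto simp: G_def)
  have "ttopen 0 X ?b = E A0 (TApp n (FA X))"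
    using E_All_open[where Y=X and m=n and C=A0] All.prems(2) by simp
  moreover have "derivable \<Delta> (ttopen 0 X ?b) (fopen 0 X F)" using AL(3) X(1) by blast
  ultimately have "derivable \<Delta> (E A0 (TApp n (FA X))) (fopen 0 X F)" by simp
  then have "derivable \<Delta> (TApp n (FA X)) (fopen 0 X F)"
    using All.IH[of "TApp n (FA X)"] All.prems by simp
  then obtain Y F' where YF: "FA X = FA Y" "derivable \<Delta> n (All F')" "fopen 0 X F = fopen 0 Y F'"
    using inv_TApp by blast
  have "ffv (All F') \<subseteq> tatoms n \<union> PFV \<Delta>" using spine_ffv[OF YF(2) All.prems(1)] .
  then have "X \<notin> ffv F'" using X by auto
  then have "F' = F" using YF(1,3) X(4) fclose_fopen by (metis atm.inject(1))
  then show ?case using YF(2) AL(1) by simp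
qed

lemma ran_add_sub: "ran (\<Gamma> ++ \<Delta>) \<subseteq> ran \<Gamma> \<union> ran \<Delta>"
  unfolding ran_def by (auto simp: map_add_Some_iff)

lemma wf_ctx_add: "wf_ctx \<Gamma> \<Longrightarrow> wf_ctx \<Delta> \<Longrightarrow> wf_ctx (\<Gamma> ++ \<Delta>)"
  unfolding wf_ctx_def using ran_add_sub[of \<Gamma> \<Delta>] by auto

lemma PFV_add: "PFV (\<Gamma> ++ \<Delta>) \<subseteq> PFV \<Gamma> \<union> PFV \<Delta>"
  unfolding PFV_def using ran_add_sub[of \<Gamma> \<Delta>] by auto

definition TY :: "ctx \<Rightarrow> trm \<Rightarrow> bool" where
  "TY \<Gamma> v = (\<forall>\<Delta> M A. derivable \<Delta> v A \<longrightarrow> Sim \<Gamma> M v \<longrightarrow> dom \<Gamma> \<inter> dom \<Delta> = {} \<longrightarrow>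
      derivable (\<Gamma> ++ \<Delta>) M A)"

lemma add_right_notin: "x \<notin> dom \<Delta> \<Longrightarrow> (\<Gamma> ++ \<Delta>) x = \<Gamma> x"
  by (auto simp: map_add_def split: option.splits)

lemma add_left_notin: "x \<notin> dom \<Gamma> \<Longrightarrow> (\<Gamma> ++ \<Delta>) x = \<Delta> x"
  by (auto simp: map_add_def split: option.splits)

lemma typingN:
  assumes IH: "\<forall>v'. tsz v' < tsz v \<longrightarrow> TY \<Gamma> v'" and wG: "wf_ctx \<Gamma>"
  shows "SimN \<Gamma> M n \<Longrightarrow> tsz n \<le> tsz v \<Longrightarrow> derivable \<Delta> n A \<Longrightarrow> dom \<Gamma> \<inter> dom \<Delta> = {} \<Longrightarrow>
    derivable (\<Gamma> ++ \<Delta>) M A"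
proof (induction n arbitrary: M A)
  case (App n0 w2)
  from App.prems(1) show ?case
  proof (cases rule: SimN.cases)
    case (nV x A0)
    have "derivable \<Delta> (App (Con (Imp (D x) A0)) (Con (D x))) A" using App.prems(3) nV by (simp add: hm_def)
    then obtain A' where "derivable \<Delta> (Con (Imp (D x) A0)) (Imp A' A)" using inv_App by blast
    then have AA: "A = A0" using inv_Con by blast
    have wD: "wf_ctx \<Delta>" using derivable_wf App.prems(3) by blast
    have "x \<notin> dom \<Delta>" using App.prems(4) nV(3) by auto
    then have "(\<Gamma> ++ \<Delta>) x = Some A0" using nV(3) by (simp add: add_right_notin)
    from derivable.ax[OF wf_ctx_add[OF wG wD] this] show ?thesis using AA nV(1) by simp
  next
    case (nApp M0 N)
    obtain A' where A': "derivable \<Delta> n0 (Imp A' A)" "derivable \<Delta> w2 A'"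
      using inv_App App.prems(3) by blast
    have d1: "derivable (\<Gamma> ++ \<Delta>) M0 (Imp A' A)"
      using App.IH(1)[OF nApp(2) _ A'(1) App.prems(4)] App.prems(2) by simp
    have "tsz w2 < tsz v" using App.prems(2) by simp
    then have "TY \<Gamma> w2" using IH by blast
    then have d2: "derivable (\<Gamma> ++ \<Delta>) N A'" using A'(2) nApp(3) App.prems(4) unfolding TY_def by blast
    show ?thesis using derivable.impE[OF d1 d2] nApp(1) by simp
  qed
next
  case (TApp n0 a)
  from TApp.prems(1) show ?case
  proof (cases rule: SimN.cases)
    case (nV x A0)
    then show ?thesis by (simp add: hm_def)
  next
    case (nTApp M0)
    obtain Y F where YF: "a = FA Y" "derivable \<Delta> n0 (All F)" "A = fopen 0 Y F"
      using inv_TApp TApp.prems(3) by blast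
    have d1: "derivable (\<Gamma> ++ \<Delta>) M0 (All F)"
      using TApp.IH[OF nTApp(2) _ YF(2) TApp.prems(4)] TApp.prems(2) by simp
    show ?thesis using derivable.allE[OF d1, of Y] nTApp(1) YF by simp
  qed
qed (auto elim: SimN.cases simp: hm_def)

lemma typing_step:
  assumes wG: "wf_ctx \<Gamma>" and IH: "\<forall>v'. tsz v' < tsz v \<longrightarrow> TY \<Gamma> v'"
  shows "TY \<Gamma> v"
  unfolding TY_def
proof (intro HOL.allI HOL.impI)
  fix \<Delta> M A
  assume d: "derivable \<Delta> v A" and S: "Sim \<Gamma> M v" and dj: "dom \<Gamma> \<inter> dom \<Delta> = {}"
  have wD: "wf_ctx \<Delta>" using derivable_wf[OF d] by blast
  have wGD: "wf_ctx (\<Gamma> ++ \<Delta>)" using wf_ctx_add[OF wG wD] .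
  from S show "derivable (\<Gamma> ++ \<Delta>) M A"
  proof (cases rule: Sim.cases)
    case (sFV y)
    have "\<Delta> y = Some A" using inv_FV d sFV by simp
    then have "(\<Gamma> ++ \<Delta>) y = Some A" by simp
    from derivable.ax[OF wGD this] show ?thesis using sFV by simp
  next
    case (sBV i)
    then show ?thesis using inv_BV d by simp
  next
    case (sCon F)
    have "F = A" using inv_Con d sCon by simp
    moreover have "wf_form A" using derivable_wf[OF d] by blast
    ultimately show ?thesis using derivable.const[OF wGD] sCon by simp
  next
    case (sLam P P')
    obtain A1 A2 L where AL: "A = Imp A1 A2" "wf_form A1" "finite L"
      "\<forall>z. z \<notin> L \<longrightarrow> derivable (\<Delta>(z \<mapsto> A1)) (topen 0 (FV z) P') A2"
      using inv_Lam d sLam(2) by blast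
    define F where "F = L \<union> dom \<Gamma> \<union> dom \<Delta> \<union> tFV P"
    have "finite F" using AL(3) wD wG by (simp add: F_def wf_ctx_def)
    then obtain z where "z \<notin> F" using fresh_nat by blast
    then have z: "z \<notin> L" "z \<notin> dom \<Gamma>" "z \<notin> dom \<Delta>" "z \<notin> tFV P" by (auto simp: F_def)
    have d1: "derivable (\<Delta>(z \<mapsto> A1)) (topen 0 (FV z) P') A2" using AL(4) z(1) by blast
    have zS: "Sim \<Gamma> (FV z) (FV z)" using z(2) by (rule Sim_SimN.sFV)
    have S1: "Sim \<Gamma> (topen 0 (FV z) P) (topen 0 (FV z) P')"
      by (rule Sim_topen(1)[OF wG zS _ sLam(3)]) simp
    have "tsz (topen 0 (FV z) P') < tsz v" using sLam(2) by simp
    then have "TY \<Gamma> (topen 0 (FV z) P')" using IH by blast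
    moreover have "dom \<Gamma> \<inter> dom (\<Delta>(z \<mapsto> A1)) = {}" using dj z(2) by auto
    ultimately have "derivable (\<Gamma> ++ \<Delta>(z \<mapsto> A1)) (topen 0 (FV z) P) A2"
      using d1 S1 unfolding TY_def by blast
    then have d2: "derivable ((\<Gamma> ++ \<Delta>)(z \<mapsto> A1)) (topen 0 (FV z) P) A2" by simp
    have zn: "z \<notin> dom (\<Gamma> ++ \<Delta>)" using z by simp
    from derivable.impI[OF zn AL(2) d2] show ?thesis
      using z(4) sLam(1) AL(1) by (simp add: tclose_topen)
  next
    case (sApp P P' Q Q')
    obtain A' where A': "derivable \<Delta> P' (Imp A' A)" "derivable \<Delta> Q' A'"
      using inv_App d sApp(2) by blast
    have "tsz P' < tsz v" "tsz Q' < tsz v" using sApp(2) by auto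
    then have "TY \<Gamma> P'" "TY \<Gamma> Q'" using IH by auto
    then have "derivable (\<Gamma> ++ \<Delta>) P (Imp A' A)" "derivable (\<Gamma> ++ \<Delta>) Q A'"
      using A' sApp(3,4) dj unfolding TY_def by blast+
    then show ?thesis using derivable.impE sApp(1) by simp
  next
    case (sTLam P P')
    obtain F L where AL: "A = All F" "finite L"
      "\<forall>X. X \<notin> L \<longrightarrow> derivable \<Delta> (ttopen 0 X P') (fopen 0 X F)"
      using inv_TLam d sTLam(2) by blast
    define G where "G = L \<union> PFV \<Gamma> \<union> PFV \<Delta> \<union> tatoms P \<union> ffv F"
    have "finite G" using AL(2) PFV_finite[OF wD] PFV_finite[OF wG] by (simp add: G_def)
    then obtain X where "X \<notin> G" using fresh_nat by blast
    then have X: "X \<notin> L" "X \<notin> PFV \<Gamma>" "X \<notin> PFV \<Delta>" "X \<notin> tatoms P" "X \<notin> ffv F"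
      by (auto simp: G_def)
    have d1: "derivable \<Delta> (ttopen 0 X P') (fopen 0 X F)" using AL(3) X(1) by blast
    have S1: "Sim \<Gamma> (ttopen 0 X P) (ttopen 0 X P')" by (rule Sim_ttopen(1)[OF wG sTLam(3)])
    have "tsz (ttopen 0 X P') < tsz v" using sTLam(2) by simp
    then have "TY \<Gamma> (ttopen 0 X P')" using IH by blast
    then have d2: "derivable (\<Gamma> ++ \<Delta>) (ttopen 0 X P) (fopen 0 X F)"
      using d1 S1 dj unfolding TY_def by blast
    have Xn: "X \<notin> PFV (\<Gamma> ++ \<Delta>)" using X PFV_add by blast
    from derivable.allI[OF d2 Xn] show ?thesis
      using X(4,5) sTLam(1) AL(1) by (simp add: ttclose_ttopen fclose_fopen)
  next
    case (sTApp P P' a)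
    obtain Y F where YF: "a = FA Y" "derivable \<Delta> P' (All F)" "A = fopen 0 Y F"
      using inv_TApp d sTApp(2) by blast
    have "tsz P' < tsz v" using sTApp(2) by auto
    then have "TY \<Gamma> P'" using IH by auto
    then have "derivable (\<Gamma> ++ \<Delta>) P (All F)" using YF(2) sTApp(3) dj unfolding TY_def by blast
    then show ?thesis using derivable.allE[of "\<Gamma> ++ \<Delta>" P F Y] sTApp(1) YF by simp
  next
    case (sE n C)
    have sp: "spine n" using SimN_spine[OF sE(2)] .
    have "wf_trm v" using derivable_wf[OF d] by blast
    then have ln: "lct 0 0 n" using sE(1) lct_E_rev[of 0 0 C n] by (simp add: wf_trm_def)
    have dn: "derivable \<Delta> n A" using E_typing[OF sp ln] d sE(1) by simp
    have "tsz n \<le> tsz v" using sE(1) E_size by simp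
    then show ?thesis using typingN[OF IH wG sE(2) _ dn dj] by simp
  qed
qed

lemma typing: "wf_ctx \<Gamma> \<Longrightarrow> TY \<Gamma> v"
proof (induction v rule: measure_induct_rule[of tsz])
  case (less v)
  then show ?case using typing_step by blast
qed

section \<open>Reflection and reification\<close>

definition neutralish :: "form \<Rightarrow> trm \<Rightarrow> bool" where
  "neutralish C N = (closed N \<and> (\<exists>n. betas N n \<and> normal n \<and> derivable Map.empty n C \<and>
      (\<forall>b. n \<noteq> Lam b) \<and> (\<forall>b. n \<noteq> TLam b)))"

definition Reify :: "form \<Rightarrow> bool" where
  "Reify C = (\<forall>t. closed t \<longrightarrow> qIv C t \<longrightarrow> (\<exists>s. betas t s \<and> normal s \<and> derivable Map.empty s C))"

definition Reflect :: "form \<Rightarrow> bool" where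
  "Reflect C = (\<forall>N. neutralish C N \<longrightarrow> qIv C (E C N))"

lemma wf_empty[simp]: "wf_ctx Map.empty" by (simp add: wf_ctx_def)

lemma hm_derivable: "wf_form B \<Longrightarrow> derivable Map.empty (hm x B) B"
proof -
  assume wB: "wf_form B"
  have wD: "wf_form (D x)" by (simp add: D_def wf_form_def)
  have "wf_form (Imp (D x) B)" using wB wD by (simp add: wf_form_def)
  then have "derivable Map.empty (Con (Imp (D x) B)) (Imp (D x) B)" by (rule derivable.const[OF wf_empty])
  moreover have "derivable Map.empty (Con (D x)) (D x)" by (rule derivable.const[OF wf_empty wD])
  ultimately show ?thesis unfolding hm_def by (rule derivable.impE)
qed

lemma hm_neutralish: "wf_form B \<Longrightarrow> neutralish B (hm x B)"
  unfolding neutralish_def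
proof (intro conjI exI[of _ "hm x B"])
  assume "wf_form B"
  then show "closed (hm x B)" by (simp add: closed_def wf_trm_def hm_lct wf_form_def)
  show "derivable Map.empty (hm x B) B" by (rule hm_derivable) fact
qed (auto simp: hm_def)

lemma Reflect_step:
  assumes IH: "\<And>C'. fsz C' < fsz C \<Longrightarrow> wf_form C' \<Longrightarrow> Reflect C' \<and> Reify C'" and wC: "wf_form C"
  shows "Reflect C"
  unfolding Reflect_def
proof (intro HOL.allI HOL.impI)
  fix N assume nN: "neutralish C N"
  then obtain n where n: "closed N" "betas N n" "normal n" "derivable Map.empty n C"
    "\<forall>b. n \<noteq> Lam b" "\<forall>b. n \<noteq> TLam b" unfolding neutralish_def by blast
  have lN: "lct 0 0 N" "tFV N = {}" using n(1) by (auto simp: closed_def wf_trm_def)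
  have wn: "wf_trm n" using betas_wf[OF n(2)] n(1) by (simp add: closed_def)
  show "qIv C (E C N)"
  proof (cases C)
    case (At a)
    then show ?thesis using n by auto
  next
    case (Imp B C')
    have wB: "wf_form B" "wf_form C'" using wC Imp by (auto simp: wf_form_def)
    have IB: "Reify B" "Reflect C'" using IH[of B] IH[of C'] wB Imp by auto
    have "\<forall>s. closed s \<and> qIv B s \<longrightarrow> qIv C' (topen 0 s (E C' (App (sh 0 N) (BV 0))))"
    proof (intro HOL.allI HOL.impI)
      fix s assume s: "closed s \<and> qIv B s"
      have ls: "lct 0 0 s" "tFV s = {}" using s by (auto simp: closed_def wf_trm_def)
      obtain s' where s': "betas s s'" "normal s'" "derivable Map.empty s' B"
        using IB(1) s unfolding Reify_def by blast
      have ws': "wf_trm s'" using betas_wf[OF s'(1)] ls by (simp add: wf_trm_def)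
      have "betas (App N s) (App n s)" using betas_appL[OF n(2)] ls by (simp add: wf_trm_def)
      also have "betas (App n s) (App n s')" using betas_appR[OF s'(1) wn] .
      finally have b: "betas (App N s) (App n s')" .
      have "neutralish C' (App N s)" unfolding neutralish_def
      proof (intro conjI exI)
        show "closed (App N s)" using lN ls by (simp add: closed_def wf_trm_def)
        show "betas (App N s) (App n s')" by (rule b)
        show "normal (App n s')" using n(3,5) s'(2) by simp
        show "derivable Map.empty (App n s') C'" using n(4) Imp s'(3) by (auto intro: derivable.impE)
      qed auto
      then have "qIv C' (E C' (App N s))" using IB(2) unfolding Reflect_def by blast
      moreover have "topen 0 s (E C' (App (sh 0 N) (BV 0))) = E C' (App N s)"
        using E_Imp_open ls lN by simp
      ultimately show "qIv C' (topen 0 s (E C' (App (sh 0 N) (BV 0))))" by simp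
    qed
    then show ?thesis using Imp by auto
  next
    case (All A)
    have "\<forall>Y. qIv (fopen 0 Y A) (ttopen 0 Y (E A (TApp (tsh 0 N) (BA 0))))"
    proof
      fix Y
      have wA: "wf_form (fopen 0 Y A)" using wC All lcf_fopen by (auto simp: wf_form_def)
      have IA: "Reflect (fopen 0 Y A)" using IH[of "fopen 0 Y A"] wA All by auto
      have "neutralish (fopen 0 Y A) (TApp N (FA Y))" unfolding neutralish_def
      proof (intro conjI exI)
        show "closed (TApp N (FA Y))" using lN by (simp add: closed_def wf_trm_def)
        show "betas (TApp N (FA Y)) (TApp n (FA Y))" using betas_tapp[OF n(2)] .
        show "normal (TApp n (FA Y))" using n(3,6) by simp
        show "derivable Map.empty (TApp n (FA Y)) (fopen 0 Y A)" using n(4) All by (auto intro: derivable.allE)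
      qed auto
      then have "qIv (fopen 0 Y A) (E (fopen 0 Y A) (TApp N (FA Y)))" using IA unfolding Reflect_def by blast
      moreover have "ttopen 0 Y (E A (TApp (tsh 0 N) (BA 0))) = E (fopen 0 Y A) (TApp N (FA Y))"
        using E_All_open lN by simp
      ultimately show "qIv (fopen 0 Y A) (ttopen 0 Y (E A (TApp (tsh 0 N) (BA 0))))" by simp
    qed
    then show ?thesis using All by auto
  qed
qed

lemma Reify_step:
  assumes IH: "\<And>C'. fsz C' < fsz C \<Longrightarrow> wf_form C' \<Longrightarrow> Reflect C' \<and> Reify C'" and wC: "wf_form C"
  shows "Reify C"
  unfolding Reify_def
proof (intro HOL.allI HOL.impI)
  fix t assume ct: "closed t" and q: "qIv C t"
  have lt: "lct 0 0 t" "tFV t = {}" using ct by (auto simp: closed_def wf_trm_def)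
  show "\<exists>s. betas t s \<and> normal s \<and> derivable Map.empty s C"
  proof (cases C)
    case (At a)
    then show ?thesis using q by simp
  next
    case (Imp B C')
    have wB: "wf_form B" "wf_form C'" using wC Imp by (auto simp: wf_form_def)
    have IB: "Reflect B" "Reify C'" using IH[of B] IH[of C'] wB Imp by auto
    obtain u where u: "betas t (Lam u)" "\<forall>s. closed s \<and> qIv B s \<longrightarrow> qIv C' (topen 0 s u)"
      using q Imp by auto
    have lu: "lct (Suc 0) 0 u" "tFV u = {}" using betas_wf[OF u(1)] betas_tFV[OF u(1)] lt
      by (auto simp: wf_trm_def)
    define x :: nat where "x = 0"
    define e where "e = E B (hm x B)"
    have le: "lct 0 0 e" "tFV e = {}" using wB(1) by (auto simp: e_def intro!: E_lct hm_lct simp: wf_form_def)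
    have qe: "qIv B e" using IB(1) hm_neutralish[OF wB(1)] unfolding Reflect_def e_def by blast
    have ce: "closed e" using le by (simp add: closed_def wf_trm_def)
    have q2: "qIv C' (topen 0 e u)" using u(2) ce qe by blast
    have c2: "closed (topen 0 e u)" using lct_topen[OF _ le(1), of u] lu le tFV_topen[of 0 e u]
      by (auto simp: closed_def wf_trm_def)
    obtain v where v: "betas (topen 0 e u) v" "normal v" "derivable Map.empty v C'"
      using IB(2) c2 q2 unfolding Reify_def by blast
    define G :: ctx where "G = Map.empty(x \<mapsto> B)"
    have wG: "wf_ctx G" using wB(1) by (simp add: G_def wf_ctx_upd)
    have Gx: "G x = Some B" by (simp add: G_def)
    have S0: "Sim G (FV x) e" unfolding e_def by (rule Sim_marker[where \<Gamma>=G and x=x and A=B, OF Gx])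
    have Su: "Sim G u u" using lu(2) by (intro Sim_refl) simp
    have S1: "Sim G (topen 0 (FV x) u) (topen 0 e u)" by (rule Sim_topen(1)[OF wG S0 le(1) Su])
    have wx: "wf_trm (topen 0 (FV x) u)" using lct_topen[OF lu(1), of "FV x"] by (simp add: wf_trm_def)
    obtain M' where M': "betas (topen 0 (FV x) u) M'" "Sim G M' v"
      using sim_multi[OF wG v(1) S1 wx] by blast
    have nM: "normal M'" using Sim_normal(1)[OF M'(2) v(2)] .
    have "TY G v" using typing[OF wG] .
    then have "derivable (G ++ Map.empty) M' C'" using v(3) M'(2) unfolding TY_def by blast
    then have dM: "derivable (Map.empty(x \<mapsto> B)) M' C'" by (simp add: G_def)
    have "derivable Map.empty (Lam (tclose 0 x M')) (Imp B C')"
      using derivable.impI[OF _ wB(1) dM] by simp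
    moreover have "betas t (Lam (tclose 0 x M'))"
    proof -
      have "betas (Lam (tclose 0 x (topen 0 (FV x) u))) (Lam (tclose 0 x M'))" by (rule betas_lam[OF M'(1)])
      moreover have "tclose 0 x (topen 0 (FV x) u) = u" using lu(2) by (simp add: tclose_topen)
      ultimately show ?thesis using u(1) by simp
    qed
    moreover have "normal (Lam (tclose 0 x M'))" using normal_tclose[OF nM] by simp
    ultimately show ?thesis using Imp by blast
  next
    case (All A)
    obtain u where u: "betas t (TLam u)" "\<forall>Y. qIv (fopen 0 Y A) (ttopen 0 Y u)"
      using q All by auto
    have lu: "lct 0 (Suc 0) u" "tFV u = {}" using betas_wf[OF u(1)] betas_tFV[OF u(1)] lt
      by (auto simp: wf_trm_def)
    have "finite (tatoms u \<union> ffv A)" by simp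
    then obtain Y where "Y \<notin> tatoms u \<union> ffv A" using fresh_nat by blast
    then have Y: "Y \<notin> tatoms u" "Y \<notin> ffv A" by auto
    have wA: "wf_form (fopen 0 Y A)" using wC All lcf_fopen by (auto simp: wf_form_def)
    have IA: "Reify (fopen 0 Y A)" using IH[of "fopen 0 Y A"] wA All by auto
    have c2: "closed (ttopen 0 Y u)" using lct_ttopen[OF lu(1)] lu(2) by (simp add: closed_def wf_trm_def)
    obtain v where v: "betas (ttopen 0 Y u) v" "normal v" "derivable Map.empty v (fopen 0 Y A)"
      using IA c2 u(2) unfolding Reify_def by blast
    have "PFV Map.empty = {}" by (simp add: PFV_def)
    then have "derivable Map.empty (TLam (ttclose 0 Y v)) (All (fclose 0 Y (fopen 0 Y A)))"
      using derivable.allI[OF v(3)] by simp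
    then have "derivable Map.empty (TLam (ttclose 0 Y v)) C" using Y(2) All by (simp add: fclose_fopen)
    moreover have "betas t (TLam (ttclose 0 Y v))"
    proof -
      have "betas (TLam (ttclose 0 Y (ttopen 0 Y u))) (TLam (ttclose 0 Y v))" by (rule betas_tlam[OF v(1)])
      moreover have "ttclose 0 Y (ttopen 0 Y u) = u" using Y(1) by (simp add: ttclose_ttopen)
      ultimately show ?thesis using u(1) by simp
    qed
    moreover have "normal (TLam (ttclose 0 Y v))" using normal_ttclose[OF v(2)] by simp
    ultimately show ?thesis by blast
  qed
qed

lemma RR: "wf_form C \<Longrightarrow> Reflect C \<and> Reify C"
proof (induction C rule: measure_induct_rule[of fsz])
  case (less C)
  show ?case using Reflect_step[OF less.IH less.prems] Reify_step[OF less.IH less.prems] by blast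
qed

lemma lct_psubst: "lct k j t \<Longrightarrow> (\<forall>x\<in>tFV t. lct 0 0 (\<sigma> x)) \<Longrightarrow> lct k j (psubst \<sigma> t)"
  by (induction t arbitrary: k j) (auto intro: lct_mono)

lemma tFV_psubst: "tFV (psubst \<sigma> t) = (\<Union>x\<in>tFV t. tFV (\<sigma> x))"
  by (induction t) auto

theorem mainTheorem2:
  fixes S :: "nat set" and \<Gamma> :: ctx and t :: trm and A :: form
  assumes "wf_ctx \<Gamma>" and "wf_form A" and "wf_trm t"
    and "tFV t \<subseteq> dom \<Gamma>"
    and "I_valid S \<Gamma> t A"
  shows "\<exists>s. normal s \<and> proof_term S s \<and> betas t s \<and> derivable \<Gamma> s A"
proof -
  note wG = assms(1)
  have pt: "proof_term S t" and qc: "qIv_ctx \<Gamma> t A" using assms(5) by (auto simp: I_valid_def)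
  let ?\<sigma> = "msub \<Gamma>"
  have sig: "\<forall>x\<in>dom \<Gamma>. closed (?\<sigma> x) \<and> qIv (the (\<Gamma> x)) (?\<sigma> x)"
  proof
    fix x assume "x \<in> dom \<Gamma>"
    then obtain B where B: "\<Gamma> x = Some B" by auto
    have wB: "wf_form B" using wf_ctx_lcf[OF wG B] by (simp add: wf_form_def)
    have "?\<sigma> x = E B (hm x B)" using B by (simp add: msub_def)
    moreover have "closed (E B (hm x B))" using wB
      by (auto simp: closed_def wf_trm_def wf_form_def intro!: E_lct hm_lct)
    moreover have "qIv B (E B (hm x B))" using RR[OF wB] hm_neutralish[OF wB] unfolding Reflect_def by blast
    ultimately show "closed (?\<sigma> x) \<and> qIv (the (\<Gamma> x)) (?\<sigma> x)" using B by simp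
  qed
  have q: "qIv A (psubst ?\<sigma> t)" using qc sig unfolding qIv_ctx_def by blast
  have lcs: "\<forall>x\<in>tFV t. lct 0 0 (?\<sigma> x)" "\<forall>x\<in>tFV t. tFV (?\<sigma> x) = {}"
    using sig assms(4) by (auto simp: closed_def wf_trm_def)
  have cl: "closed (psubst ?\<sigma> t)"
    using lct_psubst[of 0 0 t ?\<sigma>] assms(3) lcs tFV_psubst[of ?\<sigma> t]
    by (auto simp: closed_def wf_trm_def)
  obtain v where v: "betas (psubst ?\<sigma> t) v" "normal v" "derivable Map.empty v A"
    using RR[OF assms(2)] cl q unfolding Reify_def by blast
  have S0: "Sim \<Gamma> t (psubst ?\<sigma> t)" by (rule Sim_psubst)
  obtain M' where M': "betas t M'" "Sim \<Gamma> M' v"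
    using sim_multi[OF wG v(1) S0 assms(3)] by blast
  have nM: "normal M'" using Sim_normal(1)[OF M'(2) v(2)] .
  have "TY \<Gamma> v" using typing[OF wG] .
  then have "derivable (\<Gamma> ++ Map.empty) M' A" using v(3) M'(2) unfolding TY_def by blast
  then have dM: "derivable \<Gamma> M' A" by simp
  have "proof_term S M'" using betas_pt[OF M'(1) pt] .
  then show ?thesis using nM M'(1) dM by blast
qed

end
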